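(* Let $F$ be an algebraically closed field of characteristic zero. Let $A$ be a finite dimensional full algebra and $B_1,\dots,B_t$ a finite family of finite dimensional full algebras, none of which covers $A$ (i.e. $p_{B_i}$ does not cover $p_A$ for each $i$). If $f_0$ is a weakly full polynomial of $A$, then there is a strongly full polynomial $f_A\in\langle f_0\rangle_T$ of $A$ that vanishes on $B_i$ for $i=1,\dots,t$. In particular, if $B$ is a direct sum of full algebras, each not covering $A$, then there exists a strongly full polynomial $f_A\in\langle f_0\rangle_T$ of $A$ which vanishes on $B$.
   Context: For a finite dimensional algebra $A$ with Wedderburn–Malcev decomposition $A\cong A_1\times\cdots\times A_q\oplus J_A$ ($A_i$ simple, $J_A$ the Jacobson radical), $A$ is full if, up to permuting the $A_i$, $A_1J_AA_2\cdots J_AA_q\neq0$. $p_A=(\dim A_1,\dots,\dim A_q)$ as an unordered tuple (zeros ignored). A tuple $(b_1,\dots,b_s)$ covers $(a_1,\dots,a_r)$ if the latter (padded with zeros) can be partitioned into $s$ disjoint possibly empty sub-tuples $T_1,\dots,T_s$ with $\sum_{a\in T_i}a\le b_i$. Fix a basis of $A$ consisting of elementary matrices $e^i_{k,l}$ of each $A_i\cong M_{n_i}(F)$ and a basis of $J_A$; an evaluation of a multilinear polynomial is admissible if all values lie in this basis. A multilinear polynomial is weakly full of $A$ if it has a nonzero admissible evaluation in which elements from every simple component occur; it is strongly full of $A$ if it is a nonidentity of $A$ and every basis element of $A_{ss}$ occurs as a value in every nonzero admissible evaluation. $\langle f_0\rangle_T$ is the $T$-ideal generated by $f_0$. *)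

theory Defs
  imports "HOL-Computational_Algebra.Polynomial"
begin

definition alg_closed :: "'f::field itself \<Rightarrow> bool" where
  "alg_closed _ \<longleftrightarrow> (\<forall>p::'f poly. 0 < degree p \<longrightarrow> (\<exists>x. poly p x = 0))"

text \<open>An algebra of dimension adim A over 'f: elements are coordinate vectors
  (functions nat => 'f vanishing from index adim A on), product given by
  the structure constants sc A i j k.  Not necessarily unital.\<close>

record 'f alg =
  adim :: nat
  sc :: "nat \<Rightarrow> nat \<Rightarrow> nat \<Rightarrow> 'f"

type_synonym 'f vec = "nat \<Rightarrow> 'f"

definition acarrier :: "('f::field) alg \<Rightarrow> 'f vec set" where
  "acarrier A = {x. \<forall>k. adim A \<le> k \<longrightarrow> x k = 0}"

definition azero :: "('f::field) vec" where
  "azero = (\<lambda>_. 0)"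

definition aadd :: "('f::field) vec \<Rightarrow> 'f vec \<Rightarrow> 'f vec" where
  "aadd x y = (\<lambda>k. x k + y k)"

definition ascale :: "'f::field \<Rightarrow> 'f vec \<Rightarrow> 'f vec" where
  "ascale c x = (\<lambda>k. c * x k)"

definition amul :: "('f::field) alg \<Rightarrow> 'f vec \<Rightarrow> 'f vec \<Rightarrow> 'f vec" where
  "amul A x y = (\<lambda>k. if k < adim A
      then (\<Sum>i<adim A. \<Sum>j<adim A. x i * y j * sc A i j k) else 0)"

definition is_alg :: "('f::field) alg \<Rightarrow> bool" where
  "is_alg A \<longleftrightarrow> (\<forall>x\<in>acarrier A. \<forall>y\<in>acarrier A. \<forall>z\<in>acarrier A.
      amul A (amul A x y) z = amul A x (amul A y z))"

fun aprod :: "('f::field) alg \<Rightarrow> 'f vec list \<Rightarrow> 'f vec" where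
  "aprod A [] = azero"
| "aprod A [x] = x"
| "aprod A (x # y # ys) = amul A x (aprod A (y # ys))"

definition alg_dsum2 :: "('f::field) alg \<Rightarrow> 'f alg \<Rightarrow> 'f alg" where
  "alg_dsum2 A B = \<lparr> adim = adim A + adim B,
     sc = (\<lambda>i j k. if i < adim A \<and> j < adim A \<and> k < adim A then sc A i j k
        else if adim A \<le> i \<and> adim A \<le> j \<and> adim A \<le> k
        then sc B (i - adim A) (j - adim A) (k - adim A) else 0) \<rparr>"

fun alg_dsum :: "('f::field) alg list \<Rightarrow> 'f alg" where
  "alg_dsum [] = \<lparr> adim = 0, sc = (\<lambda>_ _ _. 0) \<rparr>"
| "alg_dsum (B # Bs) = alg_dsum2 B (alg_dsum Bs)"

definition is_ideal :: "('f::field) alg \<Rightarrow> 'f vec set \<Rightarrow> bool" where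
  "is_ideal A I \<longleftrightarrow> I \<subseteq> acarrier A \<and> azero \<in> I \<and>
     (\<forall>x\<in>I. \<forall>y\<in>I. aadd x y \<in> I) \<and> (\<forall>c. \<forall>x\<in>I. ascale c x \<in> I) \<and>
     (\<forall>a\<in>acarrier A. \<forall>x\<in>I. amul A a x \<in> I \<and> amul A x a \<in> I)"

definition nilpotent_set :: "('f::field) alg \<Rightarrow> 'f vec set \<Rightarrow> bool" where
  "nilpotent_set A I \<longleftrightarrow> (\<exists>N>0. \<forall>xs. length xs = N \<longrightarrow> set xs \<subseteq> I \<longrightarrow> aprod A xs = azero)"

text \<open>For a finite dimensional algebra the Jacobson radical is the largest
  nilpotent ideal, i.e. the union (= sum) of all nilpotent ideals.\<close>
definition jac_rad :: "('f::field) alg \<Rightarrow> 'f vec set" where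
  "jac_rad A = \<Union>{I. is_ideal A I \<and> nilpotent_set A I}"

text \<open>Data: q simple components, the i-th isomorphic to M_(n i)(F) with matrix
  units e i k l (k,l < n i); a basis js 0 .. js (d-1) of the radical.\<close>

definition ss_comb :: "nat \<Rightarrow> (nat \<Rightarrow> nat) \<Rightarrow> (nat \<Rightarrow> nat \<Rightarrow> nat \<Rightarrow> ('f::field) vec)
    \<Rightarrow> (nat \<Rightarrow> nat \<Rightarrow> nat \<Rightarrow> 'f) \<Rightarrow> 'f vec" where
  "ss_comb q n e a = (\<lambda>t. \<Sum>i<q. \<Sum>k<n i. \<Sum>l<n i. a i k l * e i k l t)"

definition rad_comb :: "nat \<Rightarrow> (nat \<Rightarrow> ('f::field) vec) \<Rightarrow> (nat \<Rightarrow> 'f) \<Rightarrow> 'f vec" where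
  "rad_comb d js b = (\<lambda>t. \<Sum>m<d. b m * js m t)"

definition is_WM :: "('f::field) alg \<Rightarrow> nat \<Rightarrow> (nat \<Rightarrow> nat) \<Rightarrow> (nat \<Rightarrow> nat \<Rightarrow> nat \<Rightarrow> 'f vec)
    \<Rightarrow> nat \<Rightarrow> (nat \<Rightarrow> 'f vec) \<Rightarrow> bool" where
  "is_WM A q n e d js \<longleftrightarrow>
     (\<forall>i<q. 0 < n i) \<and>
     (\<forall>i<q. \<forall>k<n i. \<forall>l<n i. e i k l \<in> acarrier A) \<and>
     (\<forall>m<d. js m \<in> acarrier A) \<and>
     (\<forall>i<q. \<forall>k<n i. \<forall>l<n i. \<forall>i'<q. \<forall>k'<n i'. \<forall>l'<n i'.
        amul A (e i k l) (e i' k' l') = (if i = i' \<and> l = k' then e i k l' else azero)) \<and>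
     (\<forall>a b. aadd (ss_comb q n e a) (rad_comb d js b) = azero \<longrightarrow>
        (\<forall>i<q. \<forall>k<n i. \<forall>l<n i. a i k l = 0) \<and> (\<forall>m<d. b m = 0)) \<and>
     (\<forall>x\<in>acarrier A. \<exists>a b. x = aadd (ss_comb q n e a) (rad_comb d js b)) \<and>
     range (rad_comb d js) = jac_rad A"

definition simple_comp :: "(nat \<Rightarrow> nat) \<Rightarrow> (nat \<Rightarrow> nat \<Rightarrow> nat \<Rightarrow> ('f::field) vec) \<Rightarrow> nat \<Rightarrow> 'f vec set" where
  "simple_comp n e i = {(\<lambda>t. \<Sum>k<n i. \<Sum>l<n i. c k l * e i k l t) | c. True}"

definition full_word :: "nat \<Rightarrow> (nat \<Rightarrow> 'a) \<Rightarrow> (nat \<Rightarrow> 'a) \<Rightarrow> 'a list" where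
  "full_word q a j = a 0 # concat (map (\<lambda>i. [j i, a (Suc i)]) [0..<q - 1])"

definition is_full :: "('f::field) alg \<Rightarrow> nat \<Rightarrow> (nat \<Rightarrow> nat) \<Rightarrow> (nat \<Rightarrow> nat \<Rightarrow> nat \<Rightarrow> 'f vec)
    \<Rightarrow> nat \<Rightarrow> (nat \<Rightarrow> 'f vec) \<Rightarrow> bool" where
  "is_full A q n e d js \<longleftrightarrow> 0 < q \<and>
     (\<exists>\<sigma>. bij_betw \<sigma> {..<q} {..<q} \<and>
       (\<exists>a j. (\<forall>i<q. a i \<in> simple_comp n e (\<sigma> i)) \<and>
              (\<forall>i. Suc i < q \<longrightarrow> j i \<in> range (rad_comb d js)) \<and>
              aprod A (full_word q a j) \<noteq> azero))"

text \<open>p_A: the tuple of dimensions dim M_(n i)(F) = (n i)^2.\<close>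
definition pdims :: "nat \<Rightarrow> (nat \<Rightarrow> nat) \<Rightarrow> nat list" where
  "pdims q n = map (\<lambda>i. n i ^ 2) [0..<q]"

definition covers :: "nat list \<Rightarrow> nat list \<Rightarrow> bool" where
  "covers bs as \<longleftrightarrow> (\<exists>g. (\<forall>i<length as. g i < length bs) \<and>
     (\<forall>j<length bs. (\<Sum>i | i < length as \<and> g i = j. as ! i) \<le> bs ! j))"

section \<open>Noncommutative polynomials (free associative algebra without 1)\<close>

type_synonym 'f ncpoly = "nat list \<Rightarrow> 'f"

definition is_ncpoly :: "('f::field) ncpoly \<Rightarrow> bool" where
  "is_ncpoly p \<longleftrightarrow> finite {w. p w \<noteq> 0} \<and> p [] = 0"

definition padd :: "('f::field) ncpoly \<Rightarrow> 'f ncpoly \<Rightarrow> 'f ncpoly" where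
  "padd p q = (\<lambda>w. p w + q w)"

definition psmult :: "'f::field \<Rightarrow> 'f ncpoly \<Rightarrow> 'f ncpoly" where
  "psmult c p = (\<lambda>w. c * p w)"

definition pmul :: "('f::field) ncpoly \<Rightarrow> 'f ncpoly \<Rightarrow> 'f ncpoly" where
  "pmul p q = (\<lambda>w. \<Sum>i\<le>length w. p (take i w) * q (drop i w))"

fun wsubst :: "(nat \<Rightarrow> ('f::field) ncpoly) \<Rightarrow> nat list \<Rightarrow> 'f ncpoly" where
  "wsubst s [] = (\<lambda>_. 0)"
| "wsubst s [x] = s x"
| "wsubst s (x # y # ys) = pmul (s x) (wsubst s (y # ys))"

definition psubst :: "(nat \<Rightarrow> ('f::field) ncpoly) \<Rightarrow> 'f ncpoly \<Rightarrow> 'f ncpoly" where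
  "psubst s p = (\<lambda>v. \<Sum>w\<in>{w. p w \<noteq> 0}. p w * wsubst s w v)"

inductive_set Tideal :: "('f::field) ncpoly \<Rightarrow> 'f ncpoly set" for f0 where
  gen: "f0 \<in> Tideal f0"
| add: "p \<in> Tideal f0 \<Longrightarrow> r \<in> Tideal f0 \<Longrightarrow> padd p r \<in> Tideal f0"
| smult: "p \<in> Tideal f0 \<Longrightarrow> psmult c p \<in> Tideal f0"
| lmul: "p \<in> Tideal f0 \<Longrightarrow> is_ncpoly g \<Longrightarrow> pmul g p \<in> Tideal f0"
| rmul: "p \<in> Tideal f0 \<Longrightarrow> is_ncpoly g \<Longrightarrow> pmul p g \<in> Tideal f0"
| subst: "p \<in> Tideal f0 \<Longrightarrow> (\<forall>i. is_ncpoly (s i)) \<Longrightarrow> psubst s p \<in> Tideal f0"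

definition peval :: "('f::field) alg \<Rightarrow> (nat \<Rightarrow> 'f vec) \<Rightarrow> 'f ncpoly \<Rightarrow> 'f vec" where
  "peval A \<phi> p = (\<lambda>t. \<Sum>w\<in>{w. p w \<noteq> 0}. p w * aprod A (map \<phi> w) t)"

definition is_identity :: "('f::field) alg \<Rightarrow> 'f ncpoly \<Rightarrow> bool" where
  "is_identity A p \<longleftrightarrow> (\<forall>\<phi>. (\<forall>x. \<phi> x \<in> acarrier A) \<longrightarrow> peval A \<phi> p = azero)"

definition multilinear :: "('f::field) ncpoly \<Rightarrow> bool" where
  "multilinear p \<longleftrightarrow> is_ncpoly p \<and> (\<exists>V. \<forall>w. p w \<noteq> 0 \<longrightarrow> distinct w \<and> set w = V)"

definition pvars :: "('f::field) ncpoly \<Rightarrow> nat set" where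
  "pvars p = \<Union>{set w | w. p w \<noteq> 0}"

definition basis_set :: "nat \<Rightarrow> (nat \<Rightarrow> nat) \<Rightarrow> (nat \<Rightarrow> nat \<Rightarrow> nat \<Rightarrow> ('f::field) vec)
    \<Rightarrow> nat \<Rightarrow> (nat \<Rightarrow> 'f vec) \<Rightarrow> 'f vec set" where
  "basis_set q n e d js = {e i k l | i k l. i < q \<and> k < n i \<and> l < n i} \<union> {js m | m. m < d}"

definition admissible :: "nat \<Rightarrow> (nat \<Rightarrow> nat) \<Rightarrow> (nat \<Rightarrow> nat \<Rightarrow> nat \<Rightarrow> ('f::field) vec)
    \<Rightarrow> nat \<Rightarrow> (nat \<Rightarrow> 'f vec) \<Rightarrow> 'f ncpoly \<Rightarrow> (nat \<Rightarrow> 'f vec) \<Rightarrow> bool" where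
  "admissible q n e d js p \<phi> \<longleftrightarrow> (\<forall>x\<in>pvars p. \<phi> x \<in> basis_set q n e d js)"

definition weakly_full :: "('f::field) alg \<Rightarrow> nat \<Rightarrow> (nat \<Rightarrow> nat) \<Rightarrow> (nat \<Rightarrow> nat \<Rightarrow> nat \<Rightarrow> 'f vec)
    \<Rightarrow> nat \<Rightarrow> (nat \<Rightarrow> 'f vec) \<Rightarrow> 'f ncpoly \<Rightarrow> bool" where
  "weakly_full A q n e d js p \<longleftrightarrow> multilinear p \<and>
     (\<exists>\<phi>. admissible q n e d js p \<phi> \<and> peval A \<phi> p \<noteq> azero \<and>
        (\<forall>i<q. \<exists>x\<in>pvars p. \<exists>k<n i. \<exists>l<n i. \<phi> x = e i k l))"

definition strongly_full :: "('f::field) alg \<Rightarrow> nat \<Rightarrow> (nat \<Rightarrow> nat) \<Rightarrow> (nat \<Rightarrow> nat \<Rightarrow> nat \<Rightarrow> 'f vec)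
    \<Rightarrow> nat \<Rightarrow> (nat \<Rightarrow> 'f vec) \<Rightarrow> 'f ncpoly \<Rightarrow> bool" where
  "strongly_full A q n e d js p \<longleftrightarrow> multilinear p \<and> \<not> is_identity A p \<and>
     (\<forall>\<phi>. admissible q n e d js p \<phi> \<and> peval A \<phi> p \<noteq> azero \<longrightarrow>
        (\<forall>i<q. \<forall>k<n i. \<forall>l<n i. \<exists>x\<in>pvars p. \<phi> x = e i k l))"

end

theory Submission
  imports Defs "HOL-Combinatorics.Permutations" "HOL-Library.Nat_Bijection"
begin

lemma amul_carrier[simp]: "amul A x y \<in> acarrier A"
  by (simp add: amul_def acarrier_def)

lemma azero_carrier[simp]: "azero \<in> acarrier A"
  by (simp add: azero_def acarrier_def)

lemma amul_zero_left[simp]: "amul A azero y = azero"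
  by (simp add: amul_def azero_def fun_eq_iff)

lemma amul_zero_right[simp]: "amul A x azero = azero"
  by (simp add: amul_def azero_def fun_eq_iff)

lemma amul_aadd_left: "amul A (aadd x y) z = aadd (amul A x z) (amul A y z)"
  by (simp add: amul_def aadd_def fun_eq_iff distrib_right sum.distrib)

lemma amul_aadd_right: "amul A z (aadd x y) = aadd (amul A z x) (amul A z y)"
  by (simp add: amul_def aadd_def fun_eq_iff distrib_left distrib_right sum.distrib)

lemma amul_ascale_left: "amul A (ascale c x) y = ascale c (amul A x y)"
  by (simp add: amul_def ascale_def fun_eq_iff sum_distrib_left mult.assoc)

lemma amul_ascale_right: "amul A x (ascale c y) = ascale c (amul A x y)"
  by (simp add: amul_def ascale_def fun_eq_iff sum_distrib_left mult.assoc mult.left_commute)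

lemma aprod_Cons: "ys \<noteq> [] \<Longrightarrow> aprod A (x # ys) = amul A x (aprod A ys)"
  by (cases ys) auto

lemma aprod_carrier: "set xs \<subseteq> acarrier A \<Longrightarrow> aprod A xs \<in> acarrier A"
  by (induction A xs rule: aprod.induct) auto

lemma is_algD: "is_alg A \<Longrightarrow> x \<in> acarrier A \<Longrightarrow> y \<in> acarrier A \<Longrightarrow> z \<in> acarrier A \<Longrightarrow>
   amul A (amul A x y) z = amul A x (amul A y z)"
  unfolding is_alg_def by blast

lemma aprod_append:
  assumes "is_alg A" "set xs \<subseteq> acarrier A" "set ys \<subseteq> acarrier A" "xs \<noteq> []" "ys \<noteq> []"
  shows "aprod A (xs @ ys) = amul A (aprod A xs) (aprod A ys)"
using assms(2,4) proof (induction xs)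
  case Nil then show ?case by simp
next
  case (Cons x xs)
  show ?case
  proof (cases "xs = []")
    case True then show ?thesis using assms(5) by (simp add: aprod_Cons)
  next
    case False
    have "aprod A ((x # xs) @ ys) = amul A x (aprod A (xs @ ys))" using assms(5) by (simp add: aprod_Cons)
    also have "\<dots> = amul A x (amul A (aprod A xs) (aprod A ys))" using Cons False by simp
    also have "\<dots> = amul A (amul A x (aprod A xs)) (aprod A ys)"
      using is_algD[OF assms(1), of x "aprod A xs" "aprod A ys"] Cons.prems aprod_carrier[of xs A] aprod_carrier[OF assms(3)]
      by auto
    also have "\<dots> = amul A (aprod A (x#xs)) (aprod A ys)" using False by (simp add: aprod_Cons)
    finally show ?thesis .
  qed
qed

lemma aprod_merge:
  assumes "is_alg A" "set xs \<subseteq> acarrier A" "set ys \<subseteq> acarrier A" "a \<in> acarrier A" "b \<in> acarrier A"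
  shows "aprod A (xs @ a # b # ys) = aprod A (xs @ amul A a b # ys)"
using assms(2) proof (induction xs)
  case Nil
  show ?case
  proof (cases "ys = []")
    case True then show ?thesis by simp
  next
    case False
    then show ?thesis using is_algD[OF assms(1) assms(4) assms(5) aprod_carrier[OF assms(3)]]
      by (simp add: aprod_Cons)
  qed
next
  case (Cons x xs)
  then show ?case by (simp add: aprod_Cons)
qed

lemma aprod_zero_mem: "azero \<in> set xs \<Longrightarrow> aprod A xs = azero"
  by (induction A xs rule: aprod.induct) auto

lemma aprod_lin_add: "aprod A (xs @ aadd u v # ys) = aadd (aprod A (xs @ u # ys)) (aprod A (xs @ v # ys))"
proof (induction xs)
  case Nil then show ?case by (cases "ys = []") (auto simp: aprod_Cons amul_aadd_left)
next
  case (Cons x xs) then show ?case by (simp add: aprod_Cons amul_aadd_right)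
qed

lemma aprod_lin_scale: "aprod A (xs @ ascale c u # ys) = ascale c (aprod A (xs @ u # ys))"
proof (induction xs)
  case Nil then show ?case by (cases "ys = []") (auto simp: aprod_Cons amul_ascale_left)
next
  case (Cons x xs) then show ?case by (simp add: aprod_Cons amul_ascale_right)
qed

lemma ideal_group:
  assumes "is_alg A" "is_ideal A I" "set xs \<subseteq> acarrier A" "0 < length (filter (\<lambda>x. x \<in> I) xs)"
  shows "\<exists>ys. length ys = length (filter (\<lambda>x. x \<in> I) xs) \<and> set ys \<subseteq> I \<and> aprod A xs = aprod A ys"
using assms(3,4) proof (induction xs)
  case Nil then show ?case by simp
next
  case (Cons x xs)
  have IC: "I \<subseteq> acarrier A" and Imul: "\<And>a y. a \<in> acarrier A \<Longrightarrow> y \<in> I \<Longrightarrow> amul A a y \<in> I \<and> amul A y a \<in> I"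
    using assms(2) unfolding is_ideal_def by auto
  show ?case
  proof (cases "x \<in> I")
    case True
    show ?thesis
    proof (cases "length (filter (\<lambda>x. x \<in> I) xs) = 0")
      case True0: True
      have "aprod A (x # xs) \<in> I"
      proof (cases "xs = []")
        case True then show ?thesis using \<open>x \<in> I\<close> by simp
      next
        case False
        then show ?thesis using Imul[of "aprod A xs" x] \<open>x \<in> I\<close> aprod_carrier[of xs A] Cons.prems
          by (simp add: aprod_Cons)
      qed
      then show ?thesis using True True0
        by (intro exI[of _ "[aprod A (x # xs)]"]) simp
    next
      case False
      then obtain ys where ys: "length ys = length (filter (\<lambda>x. x \<in> I) xs)" "set ys \<subseteq> I" "aprod A xs = aprod A ys"
        using Cons by auto
      have "xs \<noteq> []" "ys \<noteq> []" using False ys(1) by auto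
      then have "aprod A (x # xs) = aprod A (x # ys)" using ys(3) by (simp add: aprod_Cons)
      then show ?thesis using ys True by (intro exI[of _ "x # ys"]) auto
    qed
  next
    case False
    then obtain ys where ys: "length ys = length (filter (\<lambda>x. x \<in> I) xs)" "set ys \<subseteq> I" "aprod A xs = aprod A ys"
      using Cons by auto
    have "xs \<noteq> []" "ys \<noteq> []" using False ys(1) Cons.prems by auto
    then obtain y1 ys' where y1: "ys = y1 # ys'" by (cases ys) auto
    have "aprod A (x # xs) = aprod A ([] @ x # y1 # ys')" using ys(3) \<open>xs \<noteq> []\<close> y1 by (simp add: aprod_Cons)
    also have "\<dots> = aprod A ([] @ amul A x y1 # ys')"
      by (rule aprod_merge) (use assms(1) Cons.prems ys(2) y1 IC in auto)
    finally show ?thesis using ys y1 False Imul[of x y1] Cons.prems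
      by (intro exI[of _ "amul A x y1 # ys'"]) auto
  qed
qed

lemma nil_zero:
  assumes "is_alg A" "is_ideal A I" "\<forall>ys. length ys = N \<longrightarrow> set ys \<subseteq> I \<longrightarrow> aprod A ys = azero"
    "0 < N" "set xs \<subseteq> acarrier A" "N \<le> length (filter (\<lambda>x. x \<in> I) xs)"
  shows "aprod A xs = azero"
proof -
  obtain ys where ys: "length ys = length (filter (\<lambda>x. x \<in> I) xs)" "set ys \<subseteq> I" "aprod A xs = aprod A ys"
  proof -
    have "0 < length (filter (\<lambda>x. x \<in> I) xs)" using assms(4,6) by linarith
    then show ?thesis using ideal_group[OF assms(1,2,5)] that by blast
  qed
  have IC: "I \<subseteq> acarrier A" using assms(2) unfolding is_ideal_def by auto
  show ?thesis
  proof (cases "length ys = N")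
    case True then show ?thesis using ys assms(3) by auto
  next
    case False
    then have ne: "drop N ys \<noteq> []" "take N ys \<noteq> []" using ys(1) assms(4,6) by auto
    have "length (take N ys) = N" using ys(1) assms(6) by simp
    moreover have "set (take N ys) \<subseteq> I" using ys(2) set_take_subset by fast
    ultimately have z: "aprod A (take N ys) = azero" using assms(3) by blast
    have "aprod A ys = aprod A (take N ys @ drop N ys)" by simp
    also have "\<dots> = amul A (aprod A (take N ys)) (aprod A (drop N ys))"
      by (rule aprod_append) (use assms(1) ne ys(2) IC set_take_subset set_drop_subset in fastforce)+
    finally show ?thesis using z ys by simp
  qed
qed

lemma length_filter_mono':
  "(\<And>x. P x \<Longrightarrow> Q x) \<Longrightarrow> length (filter P xs) \<le> length (filter Q xs)"
  by (induction xs) auto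

lemma count_le_sum:
  fixes d :: nat
  shows "length (filter (\<lambda>x. x \<in> js ` {..<d}) xs) \<le> (\<Sum>m<d. length (filter (\<lambda>x. x = js m) xs))"
proof (induction xs)
  case Nil then show ?case by simp
next
  case (Cons x xs)
  have eq: "(\<Sum>m<d. length (filter (\<lambda>y. y = js m) (x # xs))) =
      (\<Sum>m<d. length (filter (\<lambda>y. y = js m) xs)) + (\<Sum>m<d. (if x = js m then 1 else 0))"
    by (auto simp: sum.distrib[symmetric] intro!: sum.cong)
  show ?case
  proof (cases "x \<in> js ` {..<d}")
    case True
    then obtain m0 where m0: "m0 < d" "x = js m0" by auto
    have "1 \<le> (\<Sum>m<d. (if x = js m then 1 else 0::nat))"
    proof -
      have "(if x = js m0 then 1 else 0::nat) \<le> (\<Sum>m<d. (if x = js m then 1 else 0))"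
        by (rule member_le_sum) (use m0 in auto)
      then show ?thesis using m0 by simp
    qed
    then show ?thesis using Cons True eq by simp
  next
    case False
    then show ?thesis using Cons eq by simp
  qed
qed

lemma WM_js_rad:
  assumes "is_WM A q n e d js" "m < d"
  shows "js m \<in> jac_rad A"
proof -
  have "rad_comb d js (\<lambda>m'. if m' = m then 1 else 0) = js m"
  proof -
    have "\<And>t. (\<Sum>m'<d. (if m' = m then 1 else 0) * js m' t) = js m t"
    proof -
      fix t
      have "(\<Sum>m'<d. (if m' = m then 1 else 0) * js m' t) = (\<Sum>m'<d. (if m' = m then js m' t else 0))"
        by (rule sum.cong) auto
      also have "\<dots> = js m t" using assms(2) by (simp add: sum.delta)
      finally show "(\<Sum>m'<d. (if m' = m then 1 else 0) * js m' t) = js m t" .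
    qed
    then show ?thesis by (simp add: rad_comb_def fun_eq_iff)
  qed
  then show ?thesis using assms(1) unfolding is_WM_def by (metis rangeI)
qed

lemma WM_nilbound:
  assumes "is_alg A" "is_WM A q n e d js"
  shows "\<exists>K. \<forall>xs. set xs \<subseteq> acarrier A \<longrightarrow> K < length (filter (\<lambda>x. x \<in> js ` {..<d}) xs) \<longrightarrow> aprod A xs = azero"
proof -
  have "\<forall>m<d. \<exists>I N. is_ideal A I \<and> js m \<in> I \<and> 0 < N \<and> (\<forall>ys. length ys = N \<longrightarrow> set ys \<subseteq> I \<longrightarrow> aprod A ys = azero)"
  proof (intro allI impI)
    fix m assume "m < d"
    then have "js m \<in> jac_rad A" using WM_js_rad assms(2) by blast
    then obtain I where "is_ideal A I" "nilpotent_set A I" "js m \<in> I" unfolding jac_rad_def by auto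
    then show "\<exists>I N. is_ideal A I \<and> js m \<in> I \<and> 0 < N \<and> (\<forall>ys. length ys = N \<longrightarrow> set ys \<subseteq> I \<longrightarrow> aprod A ys = azero)"
      unfolding nilpotent_set_def by blast
  qed
  then obtain II NN where II: "\<And>m. m < d \<Longrightarrow> is_ideal A (II m) \<and> js m \<in> II m \<and> 0 < NN m \<and>
      (\<forall>ys. length ys = NN m \<longrightarrow> set ys \<subseteq> II m \<longrightarrow> aprod A ys = azero)"
    by metis
  show ?thesis
  proof (intro exI[of _ "\<Sum>m<d. NN m"] allI impI)
    fix xs assume xs: "set xs \<subseteq> acarrier A" and K: "(\<Sum>m<d. NN m) < length (filter (\<lambda>x. x \<in> js ` {..<d}) xs)"
    have "\<exists>m<d. NN m \<le> length (filter (\<lambda>x. x = js m) xs)"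
    proof (rule ccontr)
      assume "\<not> ?thesis"
      then have "(\<Sum>m<d. length (filter (\<lambda>x. x = js m) xs)) \<le> (\<Sum>m<d. NN m)"
        by (intro sum_mono) auto
      then show False using K count_le_sum[of js d xs] by linarith
    qed
    then obtain m where m: "m < d" "NN m \<le> length (filter (\<lambda>x. x = js m) xs)" by blast
    have "length (filter (\<lambda>x. x = js m) xs) \<le> length (filter (\<lambda>x. x \<in> II m) xs)"
      by (rule length_filter_mono') (use II[OF m(1)] in auto)
    then show "aprod A xs = azero"
      using nil_zero[OF assms(1), of "II m" "NN m" xs] II[OF m(1)] m xs by auto
  qed
qed


lemma WM_parts1:
  assumes "is_WM A q n e d js"
  shows "\<forall>i<q. 0 < n i"
  using assms unfolding is_WM_def by (elim conjE) assumption

lemma WM_parts2: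
  assumes "is_WM A q n e d js"
  shows "\<forall>i<q. \<forall>k<n i. \<forall>l<n i. e i k l \<in> acarrier A"
  using assms unfolding is_WM_def by (elim conjE) assumption

lemma WM_parts3:
  assumes "is_WM A q n e d js"
  shows "\<forall>m<d. js m \<in> acarrier A"
  using assms unfolding is_WM_def by (elim conjE) assumption

lemma WM_parts4:
  assumes "is_WM A q n e d js"
  shows "\<forall>i<q. \<forall>k<n i. \<forall>l<n i. \<forall>i'<q. \<forall>k'<n i'. \<forall>l'<n i'.
        amul A (e i k l) (e i' k' l') = (if i = i' \<and> l = k' then e i k l' else azero)"
  using assms unfolding is_WM_def by (elim conjE) assumption

lemma WM_parts5:
  assumes "is_WM A q n e d js"
  shows "\<forall>a b. aadd (ss_comb q n e a) (rad_comb d js b) = azero \<longrightarrow>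
        (\<forall>i<q. \<forall>k<n i. \<forall>l<n i. a i k l = 0) \<and> (\<forall>m<d. b m = 0)"
  using assms unfolding is_WM_def by (elim conjE) assumption

lemma WM_parts6:
  assumes "is_WM A q n e d js"
  shows "\<forall>x\<in>acarrier A. \<exists>a b. x = aadd (ss_comb q n e a) (rad_comb d js b)"
  using assms unfolding is_WM_def by (elim conjE) assumption

lemma WM_parts7:
  assumes "is_WM A q n e d js"
  shows "range (rad_comb d js) = jac_rad A"
  using assms unfolding is_WM_def by (elim conjE) assumption

lemma WM_span:
  assumes "is_WM A q n e d js" "x \<in> acarrier A"
  shows "\<exists>a b. x = aadd (ss_comb q n e a) (rad_comb d js b)"
  using WM_parts6[OF assms(1)] assms(2) by blast

lemma WM_e_carrier: "is_WM A q n e d js \<Longrightarrow> i < q \<Longrightarrow> k < n i \<Longrightarrow> l < n i \<Longrightarrow> e i k l \<in> acarrier A"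
  using WM_parts2 by blast

lemma WM_js_carrier: "is_WM A q n e d js \<Longrightarrow> m < d \<Longrightarrow> js m \<in> acarrier A"
  using WM_parts3 by blast

lemma WM_mult: "is_WM A q n e d js \<Longrightarrow> i < q \<Longrightarrow> k < n i \<Longrightarrow> l < n i \<Longrightarrow>
   i' < q \<Longrightarrow> k' < n i' \<Longrightarrow> l' < n i' \<Longrightarrow>
   amul A (e i k l) (e i' k' l') = (if i = i' \<and> l = k' then e i k l' else azero)"
  using WM_parts4 by blast

lemma WM_pos: "is_WM A q n e d js \<Longrightarrow> i < q \<Longrightarrow> 0 < n i"
  using WM_parts1 by blast

lemma basis_carrier: "is_WM A q n e d js \<Longrightarrow> x \<in> basis_set q n e d js \<Longrightarrow> x \<in> acarrier A"
  unfolding basis_set_def using WM_e_carrier WM_js_carrier by blast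

definition psupp :: "('f::field) ncpoly \<Rightarrow> nat list set" where
  "psupp p = {w. p w \<noteq> 0}"

definition pmono :: "nat list \<Rightarrow> ('f::field) ncpoly" where
  "pmono u = (\<lambda>w. if w = u then 1 else 0)"

definition ren :: "(nat \<Rightarrow> nat) \<Rightarrow> ('f::field) ncpoly \<Rightarrow> 'f ncpoly" where
  "ren \<sigma> p = (\<lambda>w. p (map \<sigma> w))"

lemma peval_superset:
  assumes "finite W" "psupp p \<subseteq> W"
  shows "peval A \<phi> p = (\<lambda>t. \<Sum>w\<in>W. p w * aprod A (map \<phi> w) t)"
  unfolding peval_def fun_eq_iff
proof
  fix t
  show "(\<Sum>w\<in>{w. p w \<noteq> 0}. p w * aprod A (map \<phi> w) t) = (\<Sum>w\<in>W. p w * aprod A (map \<phi> w) t)"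
    by (rule sum.mono_neutral_left) (use assms in \<open>auto simp: psupp_def\<close>)
qed

lemma pvarsI: "p w \<noteq> 0 \<Longrightarrow> v \<in> set w \<Longrightarrow> v \<in> pvars p"
  unfolding pvars_def by blast

lemma peval_cong:
  assumes "\<forall>v\<in>pvars p. \<phi> v = \<phi>' v"
  shows "peval A \<phi> p = peval A \<phi>' p"
  unfolding peval_def fun_eq_iff
proof
  fix t
  show "(\<Sum>w\<in>{w. p w \<noteq> 0}. p w * aprod A (map \<phi> w) t) = (\<Sum>w\<in>{w. p w \<noteq> 0}. p w * aprod A (map \<phi>' w) t)"
  proof (rule sum.cong)
    fix w assume "w \<in> {w. p w \<noteq> 0}"
    then have "\<forall>v\<in>set w. \<phi> v = \<phi>' v" using assms pvarsI[of p w] by auto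
    then have "map \<phi> w = map \<phi>' w" by (simp add: map_eq_conv)
    then show "p w * aprod A (map \<phi> w) t = p w * aprod A (map \<phi>' w) t" by (simp only:)
  qed simp
qed

lemma peval_sum:
  assumes "finite F" "\<forall>s\<in>F. finite (psupp (h s))"
  shows "peval A \<phi> (\<lambda>w. \<Sum>s\<in>F. c s * h s w) = (\<lambda>t. \<Sum>s\<in>F. c s * peval A \<phi> (h s) t)"
proof -
  define W where "W = (\<Union>s\<in>F. psupp (h s))"
  have fW: "finite W" using assms unfolding W_def by auto
  have sub: "psupp (\<lambda>w. \<Sum>s\<in>F. c s * h s w) \<subseteq> W"
  proof
    fix w assume "w \<in> psupp (\<lambda>w. \<Sum>s\<in>F. c s * h s w)"
    then have "(\<Sum>s\<in>F. c s * h s w) \<noteq> 0" by (simp add: psupp_def)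
    then obtain s where "s \<in> F" "c s * h s w \<noteq> 0" by (meson sum.neutral)
    then show "w \<in> W" unfolding W_def psupp_def by auto
  qed
  have "peval A \<phi> (\<lambda>w. \<Sum>s\<in>F. c s * h s w) = (\<lambda>t. \<Sum>w\<in>W. (\<Sum>s\<in>F. c s * h s w) * aprod A (map \<phi> w) t)"
    by (rule peval_superset[OF fW sub])
  also have "\<dots> = (\<lambda>t. \<Sum>s\<in>F. c s * (\<Sum>w\<in>W. h s w * aprod A (map \<phi> w) t))"
    by (simp add: sum_distrib_left sum_distrib_right mult.assoc sum.swap[of _ W F])
  also have "\<dots> = (\<lambda>t. \<Sum>s\<in>F. c s * peval A \<phi> (h s) t)"
  proof -
    have "\<And>s. s \<in> F \<Longrightarrow> peval A \<phi> (h s) = (\<lambda>t. \<Sum>w\<in>W. h s w * aprod A (map \<phi> w) t)"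
      by (rule peval_superset[OF fW]) (auto simp: W_def)
    then show ?thesis by (auto simp: fun_eq_iff intro!: sum.cong)
  qed
  finally show ?thesis .
qed

lemma psupp_ren: "bij \<sigma> \<Longrightarrow> psupp (ren \<sigma> p) = map (inv \<sigma>) ` psupp p"
proof -
  assume b: "bij \<sigma>"
  have 1: "map \<sigma> (map (inv \<sigma>) w) = w" for w using b by (simp add: map_idI bij_is_surj surj_f_inv_f)
  have 2: "map (inv \<sigma>) (map \<sigma> w) = w" for w using b by (simp add: map_idI bij_is_inj inv_f_f)
  show ?thesis unfolding psupp_def ren_def
    using 1 2 by (auto simp: image_iff) (metis 2)
qed

lemma peval_ren:
  assumes "bij \<sigma>"
  shows "peval A \<psi> (ren \<sigma> p) = peval A (\<psi> \<circ> inv \<sigma>) p"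
proof -
  have 1: "map (\<sigma> \<circ> inv \<sigma>) w = w" for w using assms by (simp add: map_idI bij_is_surj surj_f_inv_f)
  have inj: "inj (map (inv \<sigma>))" using assms by (simp add: bij_imp_bij_inv bij_is_inj inj_mapI)
  have "peval A \<psi> (ren \<sigma> p) = (\<lambda>t. \<Sum>w\<in>map (inv \<sigma>) ` psupp p. ren \<sigma> p w * aprod A (map \<psi> w) t)"
    unfolding peval_def psupp_ren[OF assms, symmetric] by (simp add: psupp_def)
  also have "\<dots> = (\<lambda>t. \<Sum>w\<in>psupp p. p w * aprod A (map (\<psi> \<circ> inv \<sigma>) w) t)"
    by (subst sum.reindex) (auto simp: inj_on_subset[OF inj] ren_def 1)
  also have "\<dots> = peval A (\<psi> \<circ> inv \<sigma>) p" by (simp add: peval_def psupp_def)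
  finally show ?thesis .
qed

lemma pmul_mono:
  assumes "u \<noteq> []" "v \<noteq> []"
  shows "pmul (pmono u) (pmono v) = (pmono (u @ v) :: ('f::field) ncpoly)"
  unfolding fun_eq_iff
proof
  fix w :: "nat list"
  have "pmul (pmono u) (pmono v) w = (\<Sum>i\<le>length w. (if i = length u \<and> w = u @ v then 1 else 0 :: 'f))"
    unfolding pmul_def
  proof (rule sum.cong)
    fix i assume "i \<in> {..length w}"
    then have il: "i \<le> length w" by simp
    have "(take i w = u \<and> drop i w = v) \<longleftrightarrow> (i = length u \<and> w = u @ v)"
    proof
      assume h: "take i w = u \<and> drop i w = v"
      then have "i = length u" using il by auto
      moreover have "w = u @ v" using h by (metis append_take_drop_id)
      ultimately show "i = length u \<and> w = u @ v" by simp
    next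
      assume "i = length u \<and> w = u @ v" then show "take i w = u \<and> drop i w = v" by simp
    qed
    then show "pmono u (take i w) * pmono v (drop i w) = (if i = length u \<and> w = u @ v then 1 else 0 :: 'f)"
      by (auto simp: pmono_def)
  qed simp
  also have "\<dots> = pmono (u @ v) w"
    by (cases "w = u @ v") (auto simp: pmono_def sum.delta)
  finally show "pmul (pmono u) (pmono v) w = (pmono (u @ v) w :: 'f)" .
qed

lemma wsubst_mono:
  assumes "\<forall>v. \<tau> v \<noteq> []"
  shows "w \<noteq> [] \<Longrightarrow> wsubst (\<lambda>v. (pmono (\<tau> v) :: ('f::field) ncpoly)) w = pmono (concat (map \<tau> w))"
proof (induction "(\<lambda>v. (pmono (\<tau> v) :: 'f ncpoly))" w rule: wsubst.induct)
  case (3 x y ys)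
  have "concat (map \<tau> (y # ys)) \<noteq> []" using assms by simp
  then show ?case using 3 assms by (simp add: pmul_mono)
qed auto

lemma psubst_mono:
  assumes "\<forall>v. \<tau> v \<noteq> []" "p [] = 0"
  shows "psubst (\<lambda>v. pmono (\<tau> v)) p = (\<lambda>v. \<Sum>w\<in>psupp p. p w * (if v = concat (map \<tau> w) then 1 else 0))"
  unfolding psubst_def fun_eq_iff psupp_def
proof (intro allI sum.cong refl)
  fix v w assume "w \<in> {w. p w \<noteq> 0}"
  then have "w \<noteq> []" using assms(2) by auto
  then show "p w * wsubst (\<lambda>v. pmono (\<tau> v)) w v = p w * (if v = concat (map \<tau> w) then 1 else 0)"
  proof -
    have eq: "wsubst (\<lambda>v. pmono (\<tau> v)) w v = pmono (concat (map \<tau> w)) v"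
      by (rule fun_cong[OF wsubst_mono[OF assms(1) \<open>w \<noteq> []\<close>]])
    show ?thesis by (simp only: eq) (simp add: pmono_def)
  qed
qed

lemma psubst_mono_inj:
  assumes "\<forall>v. \<tau> v \<noteq> []" "p [] = 0" "finite (psupp p)"
    "inj_on (\<lambda>w. concat (map \<tau> w)) (insert w (psupp p))"
  shows "psubst (\<lambda>v. pmono (\<tau> v)) p (concat (map \<tau> w)) = p w"
proof -
  have "psubst (\<lambda>v. pmono (\<tau> v)) p (concat (map \<tau> w)) =
      (\<Sum>w'\<in>psupp p. p w' * (if concat (map \<tau> w) = concat (map \<tau> w') then 1 else 0))"
    by (simp add: psubst_mono[of \<tau> p, OF assms(1,2)])
  also have "\<dots> = (\<Sum>w'\<in>psupp p. (if w' = w then p w' else 0))"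
  proof (rule sum.cong)
    fix w' assume "w' \<in> psupp p"
    then show "p w' * (if concat (map \<tau> w) = concat (map \<tau> w') then 1 else 0) = (if w' = w then p w' else 0)"
      using assms(4) unfolding inj_on_def by auto
  qed simp
  also have "\<dots> = p w" using assms(3) by (simp add: sum.delta') (simp add: psupp_def)
  finally show ?thesis .
qed

lemma psubst_mono_zero:
  assumes "\<forall>v. \<tau> v \<noteq> []" "p [] = 0" "v \<notin> (\<lambda>w. concat (map \<tau> w)) ` psupp p"
  shows "psubst (\<lambda>v. pmono (\<tau> v)) p v = 0"
  using assms by (auto simp: psubst_mono intro!: sum.neutral)

lemma mono_ncpoly: "u \<noteq> [] \<Longrightarrow> is_ncpoly (pmono u)"
  unfolding is_ncpoly_def pmono_def by auto

lemma ren_as_psubst: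
  assumes "bij \<sigma>" "p [] = 0" "finite (psupp p)"
  shows "ren \<sigma> p = psubst (\<lambda>v. pmono [inv \<sigma> v]) p"
  unfolding fun_eq_iff
proof
  fix v
  have cm: "concat (map (\<lambda>v. [inv \<sigma> v]) w) = map (inv \<sigma>) w" for w by (induction w) auto
  have inj: "inj (map (inv \<sigma>))" using assms by (simp add: bij_imp_bij_inv bij_is_inj inj_mapI)
  have 1: "map (inv \<sigma>) (map \<sigma> v) = v" using assms by (simp add: map_idI bij_is_inj inv_f_f)
  have "psubst (\<lambda>v. pmono [inv \<sigma> v]) p (concat (map (\<lambda>v. [inv \<sigma> v]) (map \<sigma> v))) = p (map \<sigma> v)"
  proof (rule psubst_mono_inj)
    show "inj_on (\<lambda>w. concat (map (\<lambda>v. [inv \<sigma> v]) w)) (insert (map \<sigma> v) (psupp p))"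
      unfolding cm using inj_on_subset[OF inj] by blast
  qed (use assms in auto)
  moreover have cm2: "concat (map (\<lambda>v. [inv \<sigma> v]) (map \<sigma> v)) = v" by (simp only: cm 1)
  ultimately show "ren \<sigma> p v = psubst (\<lambda>v. pmono [inv \<sigma> v]) p v" unfolding ren_def by simp
qed

lemma Tideal_sum:
  assumes "finite F" "F \<noteq> {}" "\<forall>s\<in>F. h s \<in> Tideal f0"
  shows "(\<lambda>w. \<Sum>s\<in>F. h s w) \<in> Tideal f0"
  using assms
proof (induction F rule: finite_ne_induct)
  case (singleton x) then show ?case by simp
next
  case (insert x F)
  have "(\<lambda>w. \<Sum>s\<in>insert x F. h s w) = padd (h x) (\<lambda>w. \<Sum>s\<in>F. h s w)"
    using insert by (simp add: padd_def fun_eq_iff)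
  then show ?case using insert by (auto intro: Tideal.add)
qed

lemma aprod_concat:
  assumes "is_alg A" "\<forall>v. \<tau> v \<noteq> []" "\<forall>v. \<psi> v \<in> acarrier A"
  shows "w \<noteq> [] \<Longrightarrow> aprod A (map \<psi> (concat (map \<tau> w))) = aprod A (map (\<lambda>v. aprod A (map \<psi> (\<tau> v))) w)"
proof (induction w)
  case Nil then show ?case by simp
next
  case (Cons v w)
  show ?case
  proof (cases "w = []")
    case True then show ?thesis by simp
  next
    case False
    have ne: "concat (map \<tau> w) \<noteq> []" using False assms(2) by (cases w) auto
    have "aprod A (map \<psi> (concat (map \<tau> (v # w)))) = aprod A (map \<psi> (\<tau> v) @ map \<psi> (concat (map \<tau> w)))"
      by simp
    also have "\<dots> = amul A (aprod A (map \<psi> (\<tau> v))) (aprod A (map \<psi> (concat (map \<tau> w))))"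
      by (rule aprod_append) (use assms ne in auto)
    also have "\<dots> = aprod A (map (\<lambda>v. aprod A (map \<psi> (\<tau> v))) (v # w))"
      using Cons False by (simp add: aprod_Cons)
    finally show ?thesis .
  qed
qed

lemma peval_msubst:
  assumes "is_alg A" "\<forall>v. \<psi> v \<in> acarrier A" "\<forall>v. \<tau> v \<noteq> []" "p [] = 0" "finite (psupp p)"
    "inj_on (\<lambda>w. concat (map \<tau> w)) (psupp p)"
  shows "peval A \<psi> (psubst (\<lambda>v. pmono (\<tau> v)) p) = peval A (\<lambda>v. aprod A (map \<psi> (\<tau> v))) p"
proof -
  let ?cm = "\<lambda>w. concat (map \<tau> w)"
  let ?q = "psubst (\<lambda>v. pmono (\<tau> v)) p"
  have sub: "psupp ?q \<subseteq> ?cm ` psupp p"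
    using psubst_mono_zero[of \<tau> p, OF assms(3,4)] by (auto simp: psupp_def)
  have "peval A \<psi> ?q = (\<lambda>t. \<Sum>v\<in>?cm ` psupp p. ?q v * aprod A (map \<psi> v) t)"
    by (rule peval_superset) (use sub assms(5) in auto)
  also have "\<dots> = (\<lambda>t. \<Sum>w\<in>psupp p. ?q (?cm w) * aprod A (map \<psi> (?cm w)) t)"
    by (subst sum.reindex[OF assms(6)]) simp
  also have "\<dots> = (\<lambda>t. \<Sum>w\<in>psupp p. p w * aprod A (map (\<lambda>v. aprod A (map \<psi> (\<tau> v))) w) t)"
  proof -
    have "\<And>w. w \<in> psupp p \<Longrightarrow> ?q (?cm w) = p w"
      by (rule psubst_mono_inj) (use assms in \<open>auto simp: insert_absorb\<close>)
    moreover have "aprod A (map \<psi> (?cm w)) = aprod A (map (\<lambda>v. aprod A (map \<psi> (\<tau> v))) w)"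
      if "w \<in> psupp p" for w
    proof -
      have "w \<noteq> []" using that assms(4) by (auto simp: psupp_def)
      then show ?thesis using aprod_concat[OF assms(1,3,2)] by blast
    qed
    ultimately show ?thesis by (auto simp: fun_eq_iff intro!: sum.cong)
  qed
  also have "\<dots> = peval A (\<lambda>v. aprod A (map \<psi> (\<tau> v))) p" by (simp add: peval_def psupp_def)
  finally show ?thesis .
qed

section \<open>Linearity and reduction to basis evaluations\<close>

lemma peval_upd_lin:
  assumes "\<forall>w\<in>psupp p. \<exists>w1 w2. w = w1 @ u # w2 \<and> u \<notin> set w1 \<and> u \<notin> set w2"
  shows "peval A (\<phi>(u := aadd x y)) p = aadd (peval A (\<phi>(u := x)) p) (peval A (\<phi>(u := y)) p)"
    and "peval A (\<phi>(u := ascale c x)) p = ascale c (peval A (\<phi>(u := x)) p)"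
proof -
  have key: "\<And>z. w \<in> psupp p \<Longrightarrow> \<exists>w1 w2. \<forall>z. map (\<phi>(u := z)) w = map \<phi> w1 @ z # map \<phi> w2" for w
  proof -
    fix w assume "w \<in> psupp p"
    then obtain w1 w2 where "w = w1 @ u # w2" "u \<notin> set w1" "u \<notin> set w2" using assms by blast
    then show "\<exists>w1 w2. \<forall>z. map (\<phi>(u := z)) w = map \<phi> w1 @ z # map \<phi> w2"
      by (intro exI[of _ w1] exI[of _ w2]) (auto simp: map_eq_conv)
  qed
  have a: "aprod A (map (\<phi>(u := aadd x y)) w) = aadd (aprod A (map (\<phi>(u := x)) w)) (aprod A (map (\<phi>(u := y)) w))"
    if "w \<in> psupp p" for w
    using key[OF that] aprod_lin_add by metis
  have s: "aprod A (map (\<phi>(u := ascale c x)) w) = ascale c (aprod A (map (\<phi>(u := x)) w))"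
    if "w \<in> psupp p" for w
    using key[OF that] aprod_lin_scale by metis
  show "peval A (\<phi>(u := aadd x y)) p = aadd (peval A (\<phi>(u := x)) p) (peval A (\<phi>(u := y)) p)"
    unfolding peval_def aadd_def fun_eq_iff
    using a by (auto simp: psupp_def aadd_def distrib_left sum.distrib intro!: sum.cong)
  show "peval A (\<phi>(u := ascale c x)) p = ascale c (peval A (\<phi>(u := x)) p)"
    unfolding peval_def ascale_def fun_eq_iff
    using s by (auto simp: psupp_def ascale_def sum_distrib_left mult.left_commute intro!: sum.cong)
qed

lemma peval_upd_zero:
  assumes "\<forall>w\<in>psupp p. u \<in> set w"
  shows "peval A (\<phi>(u := azero)) p = azero"
  unfolding peval_def fun_eq_iff
proof
  fix t
  have "\<And>w. w \<in> psupp p \<Longrightarrow> aprod A (map (\<phi>(u := azero)) w) = azero"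
    using assms by (intro aprod_zero_mem) force
  then show "(\<Sum>w\<in>{w. p w \<noteq> 0}. p w * aprod A (map (\<phi>(u := azero)) w) t) = azero t"
    by (auto simp: psupp_def azero_def intro!: sum.neutral)
qed

lemma multilinear_once:
  assumes "multilinear p" "u \<in> pvars p"
  shows "\<forall>w\<in>psupp p. \<exists>w1 w2. w = w1 @ u # w2 \<and> u \<notin> set w1 \<and> u \<notin> set w2"
proof
  fix w assume w: "w \<in> psupp p"
  obtain V where V: "\<forall>w. p w \<noteq> 0 \<longrightarrow> distinct w \<and> set w = V" using assms(1) unfolding multilinear_def by blast
  obtain w' where "p w' \<noteq> 0" "u \<in> set w'" using assms(2) unfolding pvars_def by blast
  then have "u \<in> V" using V by blast
  then have "u \<in> set w" "distinct w" using V w by (auto simp: psupp_def)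
  then show "\<exists>w1 w2. w = w1 @ u # w2 \<and> u \<notin> set w1 \<and> u \<notin> set w2"
  proof -
    obtain w1 w2 where "w = w1 @ u # w2" using \<open>u \<in> set w\<close> split_list by metis
    then show ?thesis using \<open>distinct w\<close> by auto
  qed
qed

lemma multilinear_finite: "multilinear p \<Longrightarrow> finite (psupp p)"
  unfolding multilinear_def is_ncpoly_def psupp_def by blast

lemma multilinear_pvars_finite: "multilinear p \<Longrightarrow> finite (pvars p)"
  unfolding pvars_def using multilinear_finite[of p] by (auto simp: psupp_def)

lemma Z_sum:
  assumes "azero \<in> Z" "\<And>x y. x \<in> Z \<Longrightarrow> y \<in> Z \<Longrightarrow> aadd x y \<in> Z" "finite I" "\<forall>i\<in>I. f i \<in> Z"
  shows "(\<lambda>t. \<Sum>i\<in>I. f i t) \<in> Z"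
  using assms(3,4)
proof (induction I rule: finite_induct)
  case empty
  then show ?case using assms(1) by (simp add: azero_def)
next
  case (insert i I)
  have "(\<lambda>t. \<Sum>i\<in>insert i I. f i t) = aadd (f i) (\<lambda>t. \<Sum>i\<in>I. f i t)"
    using insert by (simp add: aadd_def fun_eq_iff)
  then show ?case using insert assms(2) by auto
qed

lemma ident_basis:
  assumes ml: "multilinear p" and WM: "is_WM A q n e d js"
    and hb: "\<forall>\<phi>. (\<forall>v\<in>pvars p. \<phi> v \<in> basis_set q n e d js) \<longrightarrow> peval A \<phi> p = azero"
  shows "is_identity A p"
proof -
  have fin: "finite (pvars p)" by (rule multilinear_pvars_finite[OF ml])
  have main: "\<forall>\<phi>. (\<forall>v\<in>pvars p - U. \<phi> v \<in> basis_set q n e d js) \<longrightarrow> (\<forall>v\<in>U. \<phi> v \<in> acarrier A) \<longrightarrow> peval A \<phi> p = azero"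
    if "U \<subseteq> pvars p" for U
  proof -
    have "finite U" using that fin finite_subset by blast
    then show ?thesis using that
    proof (induction U rule: finite_induct)
      case empty then show ?case using hb by simp
    next
      case (insert u U)
      show ?case
      proof (intro allI impI)
        fix \<phi> assume h1: "\<forall>v\<in>pvars p - insert u U. \<phi> v \<in> basis_set q n e d js"
          and h2: "\<forall>v\<in>insert u U. \<phi> v \<in> acarrier A"
        have upv: "u \<in> pvars p" using insert by auto
        have once: "\<forall>w\<in>psupp p. \<exists>w1 w2. w = w1 @ u # w2 \<and> u \<notin> set w1 \<and> u \<notin> set w2"
          by (rule multilinear_once[OF ml upv])
        define Z where "Z = {x. peval A (\<phi>(u := x)) p = azero}"
        have Z0: "azero \<in> Z" unfolding Z_def mem_Collect_eq
          by (rule peval_upd_zero) (use once in force)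
        have Zadd: "aadd x y \<in> Z" if "x \<in> Z" "y \<in> Z" for x y
          using that unfolding Z_def mem_Collect_eq peval_upd_lin(1)[OF once] by (simp add: aadd_def azero_def)
        have Zsc: "ascale c x \<in> Z" if "x \<in> Z" for c x
          using that unfolding Z_def mem_Collect_eq peval_upd_lin(2)[OF once] by (simp add: ascale_def azero_def)
        have Zb: "b \<in> Z" if "b \<in> basis_set q n e d js" for b
        proof -
          have c1: "\<forall>v\<in>pvars p - U. (\<phi>(u := b)) v \<in> basis_set q n e d js" using h1 that by auto
          have c2: "\<forall>v\<in>U. (\<phi>(u := b)) v \<in> acarrier A" using h2 insert.hyps(2) by auto
          have "peval A (\<phi>(u := b)) p = azero"
            using insert.IH insert.prems c1 c2 by blast
          then show ?thesis unfolding Z_def by simp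
        qed
        have Zss: "ss_comb q n e a \<in> Z" for a
        proof -
          have L3: "(\<lambda>t. \<Sum>l<n i. a i k l * e i k l t) \<in> Z" if "i < q" "k < n i" for i k
          proof -
            have "\<forall>l\<in>{..<n i}. (\<lambda>t. a i k l * e i k l t) \<in> Z"
            proof
              fix l assume l: "l \<in> {..<n i}"
              have "e i k l \<in> Z" using Zb that l unfolding basis_set_def by blast
              then show "(\<lambda>t. a i k l * e i k l t) \<in> Z" using Zsc[of "e i k l" "a i k l"] by (simp add: ascale_def)
            qed
            then show ?thesis using Z_sum[OF Z0 Zadd, where I="{..<n i}" and f="\<lambda>l t. a i k l * e i k l t"] by simp
          qed
          have L2: "(\<lambda>t. \<Sum>k<n i. \<Sum>l<n i. a i k l * e i k l t) \<in> Z" if "i < q" for i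
            using Z_sum[OF Z0 Zadd, where I="{..<n i}" and f="\<lambda>k t. \<Sum>l<n i. a i k l * e i k l t"] L3 that by simp
          show ?thesis
            unfolding ss_comb_def
            using Z_sum[OF Z0 Zadd, where I="{..<q}" and f="\<lambda>i t. \<Sum>k<n i. \<Sum>l<n i. a i k l * e i k l t"] L2 by simp
        qed
        have Zrad: "rad_comb d js b \<in> Z" for b
        proof -
          have "\<forall>m\<in>{..<d}. (\<lambda>t. b m * js m t) \<in> Z"
          proof
            fix m assume m: "m \<in> {..<d}"
            have "js m \<in> Z" using Zb m unfolding basis_set_def by blast
            then show "(\<lambda>t. b m * js m t) \<in> Z" using Zsc[of "js m" "b m"] by (simp add: ascale_def)
          qed
          then show ?thesis unfolding rad_comb_def
            using Z_sum[OF Z0 Zadd, where I="{..<d}" and f="\<lambda>m t. b m * js m t"] by simp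
        qed
        obtain a b where "\<phi> u = aadd (ss_comb q n e a) (rad_comb d js b)"
          using WM_span[OF WM] h2 by blast
        then have "\<phi> u \<in> Z" using Zadd Zss Zrad by simp
        then show "peval A \<phi> p = azero" unfolding Z_def by simp
      qed
    qed
  qed
  show ?thesis unfolding is_identity_def
    using main[OF order_refl] by auto
qed

section \<open>Alternation\<close>

lemma alt_zero:
  fixes p :: "('f::field_char_0) ncpoly"
  assumes "\<forall>w. p (map (Transposition.transpose a b) w) = - p w" "\<phi> a = \<phi> b" "finite (psupp p)"
  shows "peval A \<phi> p = azero"
  unfolding peval_def fun_eq_iff
proof
  fix t
  let ?\<tau> = "Transposition.transpose a b"
  let ?S = "psupp p"
  let ?f = "\<lambda>w. p w * aprod A (map \<phi> w) t"
  have inv: "map ?\<tau> (map ?\<tau> w) = w" for w by (simp add: map_idI)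
  have phi: "\<phi> \<circ> ?\<tau> = \<phi>"
    using assms(2) by (auto simp: fun_eq_iff transpose_def)
  have inj: "inj_on (map ?\<tau>) ?S" by (metis inj_onI inv)
  have img: "map ?\<tau> ` ?S = ?S"
  proof
    show "map ?\<tau> ` ?S \<subseteq> ?S" using assms(1) by (auto simp: psupp_def)
    show "?S \<subseteq> map ?\<tau> ` ?S"
    proof
      fix w assume "w \<in> ?S"
      then have "map ?\<tau> w \<in> ?S" using assms(1) by (auto simp: psupp_def)
      then show "w \<in> map ?\<tau> ` ?S" using inv[of w] by (metis image_eqI)
    qed
  qed
  have "sum ?f ?S = sum ?f (map ?\<tau> ` ?S)" using img by simp
  also have "\<dots> = sum (?f \<circ> map ?\<tau>) ?S" by (rule sum.reindex[OF inj])
  also have "\<dots> = - sum ?f ?S" using assms(1) phi by (simp add: sum_negf)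
  finally have "sum ?f ?S = 0" by (simp add: eq_neg_iff_add_eq_0) 
  then show "(\<Sum>w\<in>{w. p w \<noteq> 0}. p w * aprod A (map \<phi> w) t) = azero t"
    by (simp add: psupp_def azero_def)
qed

definition dcomb :: "nat \<Rightarrow> ('f::field) vec \<Rightarrow> 'f vec \<Rightarrow> 'f vec" where
  "dcomb a x y = (\<lambda>k. if k < a then x k else y (k - a))"

definition shiftv :: "nat \<Rightarrow> ('f::field) vec \<Rightarrow> 'f vec" where
  "shiftv a x = (\<lambda>k. x (k + a))"

definition restrv :: "nat \<Rightarrow> ('f::field) vec \<Rightarrow> 'f vec" where
  "restrv a x = (\<lambda>k. if k < a then x k else 0)"

lemma amul_cong_low:
  assumes "\<forall>i<adim A. x i = x' i" "\<forall>j<adim A. y j = y' j"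
  shows "amul A x y = amul A x' y'"
  unfolding amul_def fun_eq_iff using assms by (auto intro!: sum.cong)

lemma amul_dsum2:
  "amul (alg_dsum2 A B) x y = dcomb (adim A) (amul A x y) (amul B (shiftv (adim A) x) (shiftv (adim A) y))"
  unfolding fun_eq_iff
proof
  fix k
  let ?a = "adim A" and ?b = "adim B"
  let ?D = "alg_dsum2 A B"
  have aD: "adim ?D = ?a + ?b" by (simp add: alg_dsum2_def)
  have scD: "sc ?D i j k = (if i < ?a \<and> j < ?a \<and> k < ?a then sc A i j k
        else if ?a \<le> i \<and> ?a \<le> j \<and> ?a \<le> k then sc B (i - ?a) (j - ?a) (k - ?a) else 0)" for i j k
    by (simp add: alg_dsum2_def)
  show "amul ?D x y k = dcomb ?a (amul A x y) (amul B (shiftv ?a x) (shiftv ?a y)) k"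
  proof (cases "k < ?a")
    case True
    have "amul ?D x y k = (\<Sum>i<?a+?b. \<Sum>j<?a+?b. x i * y j * sc ?D i j k)"
      using True by (simp add: amul_def aD)
    also have "\<dots> = (\<Sum>i<?a. \<Sum>j<?a+?b. x i * y j * sc ?D i j k)"
      by (rule sum.mono_neutral_right) (use True in \<open>auto simp: scD\<close>)
    also have "\<dots> = (\<Sum>i<?a. \<Sum>j<?a. x i * y j * sc ?D i j k)"
      by (rule sum.cong[OF refl], rule sum.mono_neutral_right) (use True in \<open>auto simp: scD\<close>)
    also have "\<dots> = amul A x y k"
      using True by (auto simp: amul_def scD intro!: sum.cong)
    finally show ?thesis using True by (simp add: dcomb_def)
  next
    case False
    show ?thesis
    proof (cases "k < ?a + ?b")
      case True
      have "amul ?D x y k = (\<Sum>i<?a+?b. \<Sum>j<?a+?b. x i * y j * sc ?D i j k)"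
        using True by (simp add: amul_def aD)
      also have "\<dots> = (\<Sum>i\<in>{?a..<?a+?b}. \<Sum>j<?a+?b. x i * y j * sc ?D i j k)"
        by (rule sum.mono_neutral_right) (use False in \<open>auto simp: scD\<close>)
      also have "\<dots> = (\<Sum>i\<in>{?a..<?a+?b}. \<Sum>j\<in>{?a..<?a+?b}. x i * y j * sc ?D i j k)"
        by (rule sum.cong[OF refl], rule sum.mono_neutral_right) (use False in \<open>auto simp: scD\<close>)
      also have "\<dots> = (\<Sum>i\<in>{?a..<?a+?b}. \<Sum>j\<in>{?a..<?a+?b}. x i * y j * sc B (i - ?a) (j - ?a) (k - ?a))"
        using False by (auto simp: scD intro!: sum.cong)
      also have "\<dots> = (\<Sum>i\<in>{0..<?b}. \<Sum>j\<in>{0..<?b}. x (i + ?a) * y (j + ?a) * sc B i j (k - ?a))"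
      proof -
        have e: "{?a..<?a+?b} = {0 + ?a..<?b + ?a}" by (simp add: add.commute)
        show ?thesis unfolding e sum.shift_bounds_nat_ivl by simp
      qed
      also have "\<dots> = amul B (shiftv ?a x) (shiftv ?a y) (k - ?a)"
        using True False by (simp add: amul_def shiftv_def atLeast0LessThan)
      finally show ?thesis using False by (simp add: dcomb_def)
    next
      case False2: False
      then show ?thesis using False by (simp add: amul_def aD dcomb_def)
    qed
  qed
qed

lemma aprod_dsum2:
  "aprod (alg_dsum2 A B) (map \<phi> w) =
     dcomb (adim A) (aprod A (map \<phi> w)) (aprod B (map (shiftv (adim A) \<circ> \<phi>) w))"
proof (induction w rule: induct_list012)
  case 1 then show ?case by (simp add: dcomb_def azero_def fun_eq_iff)
next
  case (2 x) then show ?case by (simp add: dcomb_def shiftv_def fun_eq_iff)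
next
  case (3 x y zs)
  let ?a = "adim A"
  have "aprod (alg_dsum2 A B) (map \<phi> (x # y # zs)) = amul (alg_dsum2 A B) (\<phi> x) (aprod (alg_dsum2 A B) (map \<phi> (y # zs)))"
    by simp
  also have "\<dots> = dcomb ?a (amul A (\<phi> x) (aprod (alg_dsum2 A B) (map \<phi> (y # zs))))
      (amul B (shiftv ?a (\<phi> x)) (shiftv ?a (aprod (alg_dsum2 A B) (map \<phi> (y # zs)))))"
    by (rule amul_dsum2)
  also have "amul A (\<phi> x) (aprod (alg_dsum2 A B) (map \<phi> (y # zs))) = amul A (\<phi> x) (aprod A (map \<phi> (y # zs)))"
  proof (rule amul_cong_low)
    show "\<forall>j<?a. aprod (alg_dsum2 A B) (map \<phi> (y # zs)) j = aprod A (map \<phi> (y # zs)) j"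
      unfolding 3(2) dcomb_def by simp
  qed simp
  also have "shiftv ?a (aprod (alg_dsum2 A B) (map \<phi> (y # zs))) = aprod B (map (shiftv ?a \<circ> \<phi>) (y # zs))"
    by (simp only: 3(2)) (simp add: shiftv_def dcomb_def comp_def)
  finally show ?case by (simp add: comp_def)
qed

lemma peval_dsum2:
  assumes "finite (psupp p)"
  shows "peval (alg_dsum2 A B) \<phi> p = dcomb (adim A) (peval A \<phi> p) (peval B (shiftv (adim A) \<circ> \<phi>) p)"
  unfolding peval_def aprod_dsum2 fun_eq_iff dcomb_def by auto

lemma aprod_restr_low:
  "k < adim A \<Longrightarrow> aprod A (map \<phi> w) k = aprod A (map (restrv (adim A) \<circ> \<phi>) w) k"
proof (induction w arbitrary: k rule: induct_list012)
  case 1 then show ?case by simp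
next
  case (2 x) then show ?case by (simp add: restrv_def)
next
  case (3 x y zs)
  have "amul A (\<phi> x) (aprod A (map \<phi> (y # zs))) = amul A (restrv (adim A) (\<phi> x)) (aprod A (map (restrv (adim A) \<circ> \<phi>) (y # zs)))"
  proof (rule amul_cong_low)
    show "\<forall>j<adim A. aprod A (map \<phi> (y # zs)) j = aprod A (map (restrv (adim A) \<circ> \<phi>) (y # zs)) j"
      using 3(2) by blast
  qed (simp add: restrv_def)
  then show ?case by (simp add: comp_def)
qed

lemma ident_dsum2:
  fixes p :: "('f::field) ncpoly"
  assumes "is_identity A p" "is_identity B p" "finite (psupp p)"
  shows "is_identity (alg_dsum2 A B) p"
  unfolding is_identity_def
proof (intro allI impI)
  fix \<phi> :: "nat \<Rightarrow> 'f vec" assume h: "\<forall>x. \<phi> x \<in> acarrier (alg_dsum2 A B)"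
  let ?a = "adim A"
  have cB: "\<forall>x. (shiftv ?a \<circ> \<phi>) x \<in> acarrier B"
    using h by (auto simp: acarrier_def shiftv_def alg_dsum2_def)
  have cA: "\<forall>x. (restrv ?a \<circ> \<phi>) x \<in> acarrier A"
    by (auto simp: acarrier_def restrv_def)
  have zB: "peval B (shiftv ?a \<circ> \<phi>) p = azero" using assms(2) cB unfolding is_identity_def by blast
  have zA: "peval A (restrv ?a \<circ> \<phi>) p = azero" using assms(1) cA unfolding is_identity_def by blast
  have "peval A \<phi> p k = 0" if "k < ?a" for k
  proof -
    have "peval A \<phi> p k = peval A (restrv ?a \<circ> \<phi>) p k"
      unfolding peval_def
      by (rule sum.cong[OF refl], rule arg_cong[where f="\<lambda>z. _ * z"], rule aprod_restr_low[OF that])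
    then show ?thesis using zA by (simp add: azero_def)
  qed
  then show "peval (alg_dsum2 A B) \<phi> p = azero"
    unfolding peval_dsum2[OF assms(3)] using zB by (auto simp: dcomb_def azero_def fun_eq_iff)
qed

lemma ident_dsum0:
  fixes p :: "('f::field) ncpoly"
  shows "is_identity (alg_dsum []) p"
  unfolding is_identity_def
proof (intro allI impI)
  fix \<phi> :: "nat \<Rightarrow> 'f vec" assume h: "\<forall>x. \<phi> x \<in> acarrier (alg_dsum [])"
  then have z: "\<phi> x = azero" for x by (auto simp: acarrier_def azero_def fun_eq_iff)
  have "aprod (alg_dsum []) (map \<phi> w) = azero" for w
    by (cases w) (auto simp: z intro: aprod_zero_mem)
  then show "peval (alg_dsum []) \<phi> p = azero"
    by (simp add: peval_def azero_def fun_eq_iff)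
qed

lemma ident_dsum:
  assumes "\<forall>B\<in>set Bs. is_identity B p" "finite (psupp p)"
  shows "is_identity (alg_dsum Bs) p"
  using assms(1)
proof (induction Bs)
  case Nil show ?case by (rule ident_dsum0)
next
  case (Cons B Bs) then show ?case using ident_dsum2[OF _ _ assms(2)] by simp
qed

definition var :: "nat \<Rightarrow> nat \<Rightarrow> nat \<Rightarrow> nat" where "var M c r = M + 3 * c + r"
definition enc :: "nat \<Rightarrow> nat \<Rightarrow> nat \<Rightarrow> nat" where "enc b i t = prod_encode (b, prod_encode (i, t))"
definition blk :: "nat \<Rightarrow> nat \<Rightarrow> nat" where "blk M v = fst (prod_decode ((v - M) div 3))"

lemma var_inj: "r < 3 \<Longrightarrow> r' < 3 \<Longrightarrow> var M c r = var M c' r' \<longleftrightarrow> c = c' \<and> r = r'"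
  unfolding var_def by presburger

lemma enc_inj: "enc b i t = enc b' i' t' \<longleftrightarrow> b = b' \<and> i = i' \<and> t = t'"
  by (auto simp: enc_def prod_encode_eq)

lemma blk_var: "r < 3 \<Longrightarrow> blk M (var M (enc b i t) r) = b"
  unfolding blk_def var_def enc_def by simp

lemma var_ge: "M \<le> var M c r" by (simp add: var_def)

lemma lt3: "(r::nat) < 3 \<longleftrightarrow> r = 0 \<or> r = 1 \<or> r = 2" by auto

definition seg :: "nat \<Rightarrow> (nat \<Rightarrow> nat) \<Rightarrow> nat \<Rightarrow> nat \<Rightarrow> nat list" where
  "seg M n b i = concat (map (\<lambda>t. [var M (enc b i t) 0, var M (enc b i t) 1, var M (enc b i t) 2]) [0..<n i ^ 2])"

definition Qw :: "nat \<Rightarrow> (nat \<Rightarrow> nat) \<Rightarrow> nat \<Rightarrow> nat \<Rightarrow> nat list" where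
  "Qw M n R i = concat (map (\<lambda>b. seg M n b i) [0..<R])"

definition tau :: "nat \<Rightarrow> (nat \<Rightarrow> nat) \<Rightarrow> nat \<Rightarrow> nat \<Rightarrow> (nat \<Rightarrow> nat) \<Rightarrow> nat \<Rightarrow> nat list" where
  "tau M n R q z v = v # concat (map (\<lambda>i. if z i = v then Qw M n R i else []) [0..<q])"

lemma set_seg: "set (seg M n b i) = {var M (enc b i t) r | t r. t < n i ^ 2 \<and> r < 3}"
proof
  show "set (seg M n b i) \<subseteq> {var M (enc b i t) r | t r. t < n i ^ 2 \<and> r < 3}"
    unfolding seg_def by force
  show "{var M (enc b i t) r | t r. t < n i ^ 2 \<and> r < 3} \<subseteq> set (seg M n b i)"
    unfolding seg_def lt3 by auto
qed

lemma set_Qw: "set (Qw M n R i) = {var M (enc b i t) r | b t r. b < R \<and> t < n i ^ 2 \<and> r < 3}"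
proof
  show "set (Qw M n R i) \<subseteq> {var M (enc b i t) r | b t r. b < R \<and> t < n i ^ 2 \<and> r < 3}"
    unfolding Qw_def by (auto simp: set_seg) blast
  show "{var M (enc b i t) r | b t r. b < R \<and> t < n i ^ 2 \<and> r < 3} \<subseteq> set (Qw M n R i)"
  proof
    fix x assume "x \<in> {var M (enc b i t) r | b t r. b < R \<and> t < n i ^ 2 \<and> r < 3}"
    then obtain b t r where "x = var M (enc b i t) r" "b < R" "t < n i ^ 2" "r < 3" by blast
    then show "x \<in> set (Qw M n R i)" unfolding Qw_def by (auto simp: set_seg intro!: bexI[of _ b])
  qed
qed

lemma distinct_seg: "distinct (seg M n b i)"
  unfolding seg_def
proof (rule distinct_concat)
  show "distinct (map (\<lambda>t. [var M (enc b i t) 0, var M (enc b i t) 1, var M (enc b i t) 2]) [0..<n i ^ 2])"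
    by (auto simp: distinct_map inj_on_def var_inj enc_inj)
  show "\<And>ys. ys \<in> set (map (\<lambda>t. [var M (enc b i t) 0, var M (enc b i t) 1, var M (enc b i t) 2]) [0..<n i ^ 2]) \<Longrightarrow> distinct ys"
    by (auto simp: var_inj)
  show "\<And>ys zs. ys \<in> set (map (\<lambda>t. [var M (enc b i t) 0, var M (enc b i t) 1, var M (enc b i t) 2]) [0..<n i ^ 2]) \<Longrightarrow>
      zs \<in> set (map (\<lambda>t. [var M (enc b i t) 0, var M (enc b i t) 1, var M (enc b i t) 2]) [0..<n i ^ 2]) \<Longrightarrow> ys \<noteq> zs \<Longrightarrow> set ys \<inter> set zs = {}"
    by (auto simp: var_inj enc_inj)
qed

lemma distinct_Qw: "0 < n i \<Longrightarrow> distinct (Qw M n R i)"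
  unfolding Qw_def
proof (rule distinct_concat)
  assume np: "0 < n i"
  have "seg M n b i \<noteq> seg M n b' i" if "b \<noteq> b'" for b b'
  proof -
    have "var M (enc b i 0) 0 \<in> set (seg M n b i)" unfolding set_seg
      by (rule CollectI, rule exI[of _ 0], rule exI[of _ 0]) (use np in simp)
    moreover have "var M (enc b i 0) 0 \<notin> set (seg M n b' i)"
      using that by (auto simp: set_seg var_inj enc_inj)
    ultimately show ?thesis by metis
  qed
  then show "distinct (map (\<lambda>b. seg M n b i) [0..<R])"
    by (auto simp: distinct_map inj_on_def)
  show "\<And>ys. ys \<in> set (map (\<lambda>b. seg M n b i) [0..<R]) \<Longrightarrow> distinct ys" using distinct_seg by auto
  show "\<And>ys zs. ys \<in> set (map (\<lambda>b. seg M n b i) [0..<R]) \<Longrightarrow>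
      zs \<in> set (map (\<lambda>b. seg M n b i) [0..<R]) \<Longrightarrow> ys \<noteq> zs \<Longrightarrow> set ys \<inter> set zs = {}"
    by (auto simp: set_seg var_inj enc_inj)
qed

lemma concat_delta: "i < q \<Longrightarrow> concat (map (\<lambda>i'. if i' = i then L else []) [0..<q]) = L"
proof (induction q)
  case 0 then show ?case by simp
next
  case (Suc q)
  show ?case
  proof (cases "i = q")
    case True
    have "concat (map (\<lambda>i'. if i' = i then L else []) [0..<q]) = []" using True by auto
    then show ?thesis using True by simp
  next
    case False then show ?thesis using Suc by simp
  qed
qed

lemma concat_split: "j < N \<Longrightarrow> \<exists>pre post. concat (map f [0..<N]) = pre @ f j @ post"
proof -
  assume j: "j < N"
  have "[0..<N] = [0..<j] @ j # [Suc j..<N]"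
    using upt_add_eq_append[of 0 j "N - j"] j upt_conv_Cons[of j N] by simp
  then show ?thesis by auto
qed

locale cons =
  fixes A :: "('f::field_char_0) alg" and q :: nat and n :: "nat \<Rightarrow> nat" and e :: "nat \<Rightarrow> nat \<Rightarrow> nat \<Rightarrow> 'f vec"
    and d :: nat and js :: "nat \<Rightarrow> 'f vec" and f0 :: "'f ncpoly" and \<phi>0 :: "nat \<Rightarrow> 'f vec"
    and z kk ll :: "nat \<Rightarrow> nat" and M R :: nat
  assumes alg: "is_alg A" and WM: "is_WM A q n e d js" and ml: "multilinear f0"
    and phi0c: "\<forall>v. \<phi>0 v \<in> acarrier A" and nz: "peval A \<phi>0 f0 \<noteq> azero"
    and zv: "\<forall>i<q. z i \<in> pvars f0 \<and> kk i < n i \<and> ll i < n i \<and> \<phi>0 (z i) = e i (kk i) (ll i)"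
    and zinj: "inj_on z {..<q}" and Mb: "\<forall>v\<in>pvars f0. v < M"
begin

definition cm :: "nat list \<Rightarrow> nat list" where "cm w = concat (map (tau M n R q z) w)"

lemma npos: "i < q \<Longrightarrow> 0 < n i" using WM_pos[OF WM] .

lemma tau_z: "i < q \<Longrightarrow> tau M n R q z (z i) = z i # Qw M n R i"
proof -
  assume i: "i < q"
  have eq: "map (\<lambda>i'. if z i' = z i then Qw M n R i' else []) [0..<q] = map (\<lambda>i'. if i' = i then Qw M n R i else []) [0..<q]"
    using zinj i by (auto simp: inj_on_def)
  have "concat (map (\<lambda>i'. if z i' = z i then Qw M n R i' else []) [0..<q]) = Qw M n R i"
    unfolding eq by (rule concat_delta[OF i])
  then show ?thesis unfolding tau_def by simp
qed

lemma tau_other: "v \<notin> z ` {..<q} \<Longrightarrow> tau M n R q z v = [v]"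
  unfolding tau_def by auto

lemma tau_ne: "tau M n R q z v \<noteq> []" by (simp add: tau_def)

lemma f0_ncpoly: "is_ncpoly f0" using ml by (simp add: multilinear_def)
lemma f0_nil: "f0 [] = 0" using f0_ncpoly by (simp add: is_ncpoly_def)
lemma f0_fin: "finite (psupp f0)" using f0_ncpoly by (simp add: is_ncpoly_def psupp_def)

lemma f0_words: "w \<in> psupp f0 \<Longrightarrow> distinct w \<and> set w = pvars f0"
proof -
  assume w: "w \<in> psupp f0"
  obtain V where V: "\<forall>w. f0 w \<noteq> 0 \<longrightarrow> distinct w \<and> set w = V" using ml unfolding multilinear_def by blast
  have "pvars f0 = V" using V w unfolding pvars_def psupp_def by auto
  then show ?thesis using V w by (auto simp: psupp_def)
qed

lemma f0_lt: "w \<in> psupp f0 \<Longrightarrow> set w \<subseteq> {..<M}"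
  using f0_words Mb by auto

lemma z_pvars: "i < q \<Longrightarrow> z i \<in> pvars f0" using zv by blast

lemma Qw_ge: "x \<in> set (Qw M n R i) \<Longrightarrow> M \<le> x"
  by (auto simp: set_Qw var_ge)

lemma set_tau: "set (tau M n R q z v) = insert v (\<Union>i\<in>{i. i < q \<and> z i = v}. set (Qw M n R i))"
  unfolding tau_def by (auto split: if_splits)

lemma filter_cm: "set w \<subseteq> {..<M} \<Longrightarrow> filter (\<lambda>x. x < M) (cm w) = w"
proof (induction w)
  case Nil then show ?case by (simp add: cm_def)
next
  case (Cons v w)
  have "filter (\<lambda>x. x < M) (tau M n R q z v) = [v]"
  proof -
    have "\<forall>x\<in>set (concat (map (\<lambda>i. if z i = v then Qw M n R i else []) [0..<q])). \<not> x < M"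
      using Qw_ge by (fastforce split: if_splits)
    then show ?thesis using Cons.prems unfolding tau_def by simp
  qed
  then show ?case using Cons by (simp add: cm_def)
qed

lemma cm_inj: "inj_on cm {w. set w \<subseteq> {..<M}}"
  by (rule inj_onI) (metis filter_cm mem_Collect_eq)

definition g :: "'f ncpoly" where "g = psubst (\<lambda>v. pmono (tau M n R q z v)) f0"

lemma cm_inj_supp: "inj_on cm (insert w (psupp f0))" if "set w \<subseteq> {..<M}"
  by (rule inj_on_subset[OF cm_inj]) (use that f0_lt in auto)

lemma g_cm: "set w \<subseteq> {..<M} \<Longrightarrow> g (cm w) = f0 w"
  unfolding g_def cm_def
  by (rule psubst_mono_inj) (use tau_ne f0_nil f0_fin cm_inj_supp in \<open>auto simp: cm_def[abs_def]\<close>)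

lemma g_supp: "g v \<noteq> 0 \<Longrightarrow> \<exists>w0\<in>psupp f0. v = cm w0"
proof (rule ccontr)
  assume "g v \<noteq> 0" "\<not> (\<exists>w0\<in>psupp f0. v = cm w0)"
  then have "v \<notin> (\<lambda>w. concat (map (tau M n R q z) w)) ` psupp f0" by (auto simp: cm_def)
  then have "g v = 0" unfolding g_def by (rule psubst_mono_zero[rotated 2]) (use tau_ne f0_nil in auto)
  then show False using \<open>g v \<noteq> 0\<close> by simp
qed

lemma cm_ne: "w \<noteq> [] \<Longrightarrow> cm w \<noteq> []"
  by (cases w) (auto simp: cm_def tau_ne)

lemma g_nil: "g [] = 0"
proof (rule ccontr)
  assume "g [] \<noteq> 0"
  then obtain w0 where "w0 \<in> psupp f0" "[] = cm w0" using g_supp by blast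
  then show False using f0_nil cm_ne[of w0] by (auto simp: psupp_def)
qed

lemma g_fin: "finite (psupp g)"
proof -
  have "psupp g \<subseteq> cm ` psupp f0" using g_supp by (auto simp: psupp_def)
  then show ?thesis using f0_fin finite_subset by blast
qed

lemma g_T: "g \<in> Tideal f0"
  unfolding g_def by (rule Tideal.subst[OF Tideal.gen]) (use tau_ne mono_ncpoly in auto)

section \<open>The alternating group\<close>

definition Xset :: "nat set" where
  "Xset = {var M (enc b i t) 1 | b i t. b < R \<and> i < q \<and> t < n i ^ 2}"
definition Sb :: "nat \<Rightarrow> nat set" where
  "Sb b = {var M (enc b i t) 1 | i t. i < q \<and> t < n i ^ 2}"
definition Vb :: "nat \<Rightarrow> nat set" where
  "Vb b = {var M (enc b i t) r | i t r. i < q \<and> t < n i ^ 2 \<and> r < 3}"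
definition G :: "(nat \<Rightarrow> nat) set" where
  "G = {\<sigma>. \<sigma> permutes Xset \<and> (\<forall>x\<in>Xset. blk M (\<sigma> x) = blk M x)}"
definition fA :: "'f ncpoly" where
  "fA = (\<lambda>w. \<Sum>\<sigma>\<in>G. of_int (sign \<sigma>) * g (map \<sigma> w))"

lemma Xset_eq: "Xset = (\<lambda>(b, i, t). var M (enc b i t) 1) ` ({..<R} \<times> Sigma {..<q} (\<lambda>i. {..<n i ^ 2}))"
  unfolding Xset_def by force

lemma Xset_fin: "finite Xset" unfolding Xset_eq by auto

lemma G_fin: "finite G"
proof -
  have "G \<subseteq> {\<sigma>. \<sigma> permutes Xset}" unfolding G_def by auto
  then show ?thesis using finite_permutations[OF Xset_fin] finite_subset by blast
qed

lemma id_G: "id \<in> G" unfolding G_def by (simp add: permutes_id)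

lemma G_perm: "\<sigma> \<in> G \<Longrightarrow> \<sigma> permutes Xset" unfolding G_def by blast

lemma G_bij: "\<sigma> \<in> G \<Longrightarrow> bij \<sigma>" using G_perm permutes_bij by blast

lemma G_permutation: "\<sigma> \<in> G \<Longrightarrow> permutation \<sigma>"
  using G_perm Xset_fin permutation_permutes by blast

lemma G_blk: "\<sigma> \<in> G \<Longrightarrow> x \<in> Xset \<Longrightarrow> blk M (\<sigma> x) = blk M x" unfolding G_def by blast

lemma G_inv_X: "\<sigma> \<in> G \<Longrightarrow> x \<in> Xset \<Longrightarrow> inv \<sigma> x \<in> Xset \<and> blk M (inv \<sigma> x) = blk M x"
proof -
  assume s: "\<sigma> \<in> G" and x: "x \<in> Xset"
  have p: "inv \<sigma> permutes Xset" using permutes_inv[OF G_perm[OF s]] .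
  have ix: "inv \<sigma> x \<in> Xset" using permutes_in_image[OF p] x by simp
  have "\<sigma> (inv \<sigma> x) = x" using permutes_inverses[OF G_perm[OF s]] by simp
  then show ?thesis using G_blk[OF s ix] ix by simp
qed

lemma G_inv_notX: "\<sigma> \<in> G \<Longrightarrow> x \<notin> Xset \<Longrightarrow> inv \<sigma> x = x"
  using permutes_not_in[OF permutes_inv[OF G_perm]] by blast

lemma G_inv_G: "\<sigma> \<in> G \<Longrightarrow> inv \<sigma> \<in> G"
proof -
  assume s: "\<sigma> \<in> G"
  have "inv \<sigma> permutes Xset" using permutes_inv[OF G_perm[OF s]] .
  moreover have "\<forall>x\<in>Xset. blk M (inv \<sigma> x) = blk M x" using G_inv_X[OF s] by blast
  ultimately show ?thesis unfolding G_def by blast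
qed

lemma fA_ren: "fA = (\<lambda>w. \<Sum>\<sigma>\<in>G. psmult (of_int (sign \<sigma>)) (ren \<sigma> g) w)"
  by (simp add: fA_def psmult_def ren_def)

lemma fA_T: "fA \<in> Tideal f0"
proof -
  have "\<forall>\<sigma>\<in>G. psmult (of_int (sign \<sigma>)) (ren \<sigma> g) \<in> Tideal f0"
  proof
    fix \<sigma> assume s: "\<sigma> \<in> G"
    have "ren \<sigma> g = psubst (\<lambda>v. pmono [inv \<sigma> v]) g"
      by (rule ren_as_psubst[OF G_bij[OF s] g_nil g_fin])
    moreover have "psubst (\<lambda>v. pmono [inv \<sigma> v]) g \<in> Tideal f0"
      by (rule Tideal.subst[OF g_T]) (simp add: mono_ncpoly)
    ultimately show "psmult (of_int (sign \<sigma>)) (ren \<sigma> g) \<in> Tideal f0" by (simp add: Tideal.smult)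
  qed
  moreover have "G \<noteq> {}" using id_G by blast
  ultimately show ?thesis unfolding fA_ren by (intro Tideal_sum[OF G_fin]) 
qed

lemma fA_supp: "fA w \<noteq> 0 \<Longrightarrow> \<exists>\<sigma>\<in>G. \<exists>w0\<in>psupp f0. w = map (inv \<sigma>) (cm w0)"
proof -
  assume "fA w \<noteq> 0"
  then obtain \<sigma> where s: "\<sigma> \<in> G" "g (map \<sigma> w) \<noteq> 0" unfolding fA_def
    by (metis (no_types, lifting) mult_zero_right sum.neutral)
  then obtain w0 where w0: "w0 \<in> psupp f0" "map \<sigma> w = cm w0" using g_supp by blast
  have "map (inv \<sigma>) (map \<sigma> w) = w"
    using G_bij[OF s(1)] by (simp add: map_idI bij_is_inj inv_f_f)
  then show ?thesis using s w0 by metis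
qed

lemma fA_fin: "finite (psupp fA)"
proof -
  have "psupp fA \<subseteq> (\<Union>\<sigma>\<in>G. map (inv \<sigma>) ` cm ` psupp f0)"
    using fA_supp by (fastforce simp: psupp_def)
  then show ?thesis using G_fin f0_fin finite_subset by blast
qed

lemma fA_nil: "fA [] = 0" by (simp add: fA_def g_nil)

end

context cons begin

definition Wall :: "nat set" where
  "Wall = pvars f0 \<union> (\<Union>i<q. set (Qw M n R i))"

lemma set_cm: "w0 \<in> psupp f0 \<Longrightarrow> set (cm w0) = Wall"
proof -
  assume w0: "w0 \<in> psupp f0"
  have sw: "set w0 = pvars f0" using f0_words[OF w0] by blast
  have "set (cm w0) = (\<Union>v\<in>pvars f0. set (tau M n R q z v))"
    unfolding cm_def using sw by simp
  also have "\<dots> = Wall"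
  proof
    show "(\<Union>v\<in>pvars f0. set (tau M n R q z v)) \<subseteq> Wall"
      unfolding set_tau Wall_def by auto
    show "Wall \<subseteq> (\<Union>v\<in>pvars f0. set (tau M n R q z v))"
    proof
      fix x assume "x \<in> Wall"
      then consider "x \<in> pvars f0" | i where "i < q" "x \<in> set (Qw M n R i)" unfolding Wall_def by blast
      then show "x \<in> (\<Union>v\<in>pvars f0. set (tau M n R q z v))"
      proof cases
        case 1 then show ?thesis unfolding set_tau by blast
      next
        case 2
        then have "x \<in> set (tau M n R q z (z i))" using tau_z by simp
        then show ?thesis using z_pvars[OF 2(1)] by blast
      qed
    qed
  qed
  finally show ?thesis .
qed

lemma Qw_disj: "i \<noteq> i' \<Longrightarrow> set (Qw M n R i) \<inter> set (Qw M n R i') = {}"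
  by (auto simp: set_Qw var_inj enc_inj)

lemma distinct_tau: "v < M \<Longrightarrow> distinct (tau M n R q z v)"
proof (cases "v \<in> z ` {..<q}")
  case True
  then obtain i where i: "i < q" "v = z i" by blast
  assume "v < M"
  then show ?thesis using i tau_z[OF i(1)] distinct_Qw[of n i M R, OF npos[OF i(1)]] Qw_ge by fastforce
next
  case False then show ?thesis by (simp add: tau_other)
qed

lemma distinct_cm: "w0 \<in> psupp f0 \<Longrightarrow> distinct (cm w0)"
proof -
  assume w0: "w0 \<in> psupp f0"
  have dw: "distinct w0" and sw: "set w0 = pvars f0" using f0_words[OF w0] by auto
  have lt: "\<And>v. v \<in> set w0 \<Longrightarrow> v < M" using Mb sw by blast
  show ?thesis unfolding cm_def
  proof (rule distinct_concat)
    have "inj_on (tau M n R q z) (set w0)" by (rule inj_onI) (simp add: tau_def)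
    then show "distinct (map (tau M n R q z) w0)" using dw by (simp add: distinct_map)
    show "\<And>ys. ys \<in> set (map (tau M n R q z) w0) \<Longrightarrow> distinct ys" using distinct_tau lt by auto
    show "\<And>ys zs. ys \<in> set (map (tau M n R q z) w0) \<Longrightarrow> zs \<in> set (map (tau M n R q z) w0) \<Longrightarrow> ys \<noteq> zs \<Longrightarrow> set ys \<inter> set zs = {}"
    proof -
      fix ys zs assume "ys \<in> set (map (tau M n R q z) w0)" "zs \<in> set (map (tau M n R q z) w0)" "ys \<noteq> zs"
      then obtain v v' where vv: "v \<in> set w0" "v' \<in> set w0" "ys = tau M n R q z v" "zs = tau M n R q z v'" "v \<noteq> v'"
        by auto
      have "v < M" "v' < M" using lt vv by auto
      show "set ys \<inter> set zs = {}"
      proof (rule ccontr)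
        assume "set ys \<inter> set zs \<noteq> {}"
        then obtain x where x: "x \<in> set (tau M n R q z v)" "x \<in> set (tau M n R q z v')" using vv by auto
        show False
        proof (cases "x < M")
          case True
          then have "x = v" "x = v'" using x Qw_ge unfolding set_tau by fastforce+
          then show False using vv by simp
        next
          case False
          then have "x \<noteq> v" "x \<noteq> v'" using \<open>v < M\<close> \<open>v' < M\<close> by auto
          then obtain i i' where "i < q" "z i = v" "x \<in> set (Qw M n R i)" "i' < q" "z i' = v'" "x \<in> set (Qw M n R i')"
            using x unfolding set_tau by blast
          then show False using Qw_disj[of i i'] vv(5) by auto
        qed
      qed
    qed
  qed
qed

lemma fA_words: "fA w \<noteq> 0 \<Longrightarrow> distinct w \<and> set w = Wall"
proof -
  assume "fA w \<noteq> 0"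
  then obtain \<sigma> w0 where s: "\<sigma> \<in> G" "w0 \<in> psupp f0" "w = map (inv \<sigma>) (cm w0)" using fA_supp by blast
  have b: "bij (inv \<sigma>)" using G_bij[OF s(1)] by (simp add: bij_imp_bij_inv)
  have XW: "Xset \<subseteq> Wall" unfolding Xset_def Wall_def by (force simp: set_Qw)
  have img: "inv \<sigma> ` Wall = Wall"
  proof -
    have p: "inv \<sigma> permutes Xset" using permutes_inv[OF G_perm[OF s(1)]] .
    have "inv \<sigma> ` Wall = inv \<sigma> ` Xset \<union> inv \<sigma> ` (Wall - Xset)" using XW by blast
    also have "inv \<sigma> ` Xset = Xset" using permutes_image[OF p] .
    also have "inv \<sigma> ` (Wall - Xset) = Wall - Xset" using permutes_not_in[OF p] by force
    finally show ?thesis using XW by blast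
  qed
  have "inj_on (inv \<sigma>) (set (cm w0))" using bij_is_inj[OF b] inj_on_subset[OF _ subset_UNIV] by blast
  then show ?thesis using s distinct_cm[OF s(2)] set_cm[OF s(2)] img
    by (simp add: distinct_map)
qed

lemma fA_ml: "multilinear fA"
  unfolding multilinear_def is_ncpoly_def
  using fA_fin fA_nil fA_words by (auto simp: psupp_def)

lemma XsubW: "Xset \<subseteq> Wall" unfolding Xset_def Wall_def by (force simp: set_Qw)

lemma VbsubW: "b < R \<Longrightarrow> Vb b \<subseteq> Wall" unfolding Vb_def Wall_def by (force simp: set_Qw)

lemma SbsubX: "b < R \<Longrightarrow> Sb b \<subseteq> Xset" unfolding Sb_def Xset_def by force

lemma SbsubVb: "Sb b \<subseteq> Vb b" unfolding Sb_def Vb_def by force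

lemma blk_Vb: "v \<in> Vb b \<Longrightarrow> blk M v = b" unfolding Vb_def by (auto simp: blk_var)

lemma fA_alt:
  assumes "bb < R" "a \<in> Sb bb" "a' \<in> Sb bb" "a \<noteq> a'"
  shows "fA (map (Transposition.transpose a a') w) = - fA w"
proof -
  let ?t = "Transposition.transpose a a'"
  have aX: "a \<in> Xset" "a' \<in> Xset" using assms SbsubX by auto
  have tG: "?t \<in> G"
  proof -
    have "?t permutes Xset" by (rule permutes_swap_id) (use aX in auto)
    moreover have "blk M a = blk M a'" using assms(2,3) SbsubVb blk_Vb by blast
    then have "\<forall>x\<in>Xset. blk M (?t x) = blk M x" by (auto simp: transpose_def)
    ultimately show ?thesis unfolding G_def by blast
  qed
  have closed: "\<sigma> \<circ> ?t \<in> G" if "\<sigma> \<in> G" for \<sigma>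
  proof -
    have "\<sigma> \<circ> ?t permutes Xset" by (rule permutes_compose[OF G_perm[OF tG] G_perm[OF that]])
    moreover have "\<forall>x\<in>Xset. blk M ((\<sigma> \<circ> ?t) x) = blk M x"
    proof
      fix x assume x: "x \<in> Xset"
      have "?t x \<in> Xset" using permutes_in_image[OF G_perm[OF tG]] x by simp
      then show "blk M ((\<sigma> \<circ> ?t) x) = blk M x" using G_blk[OF that] G_blk[OF tG x] by simp
    qed
    ultimately show ?thesis unfolding G_def by blast
  qed
  have inv2: "(\<sigma> \<circ> ?t) \<circ> ?t = \<sigma>" for \<sigma> :: "nat \<Rightarrow> nat"
    by (simp add: o_assoc[symmetric])
  have st: "sign ?t = -1" if "a \<noteq> a'" using that by (simp add: sign_swap_id)
  show ?thesis
  proof -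
    note False = assms(4)
    have "fA (map ?t w) = (\<Sum>\<sigma>\<in>G. of_int (sign \<sigma>) * g (map (\<sigma> \<circ> ?t) w))"
      unfolding fA_def by simp
    also have "\<dots> = (\<Sum>\<rho>\<in>G. of_int (sign (\<rho> \<circ> ?t)) * g (map \<rho> w))"
      by (rule sum.reindex_bij_witness[where i="\<lambda>\<rho>. \<rho> \<circ> ?t" and j="\<lambda>\<sigma>. \<sigma> \<circ> ?t"])
         (auto simp: closed inv2)
    also have "\<dots> = (\<Sum>\<rho>\<in>G. - (of_int (sign \<rho>) * g (map \<rho> w)))"
    proof (rule sum.cong[OF refl])
      fix \<rho> assume r: "\<rho> \<in> G"
      have "sign (\<rho> \<circ> ?t) = sign \<rho> * sign ?t"
        by (rule sign_compose[OF G_permutation[OF r] G_permutation[OF tG]])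
      then show "of_int (sign (\<rho> \<circ> ?t)) * g (map \<rho> w) = - (of_int (sign \<rho>) * g (map \<rho> w))"
        using st[OF False] by simp
    qed
    also have "\<dots> = - fA w" by (simp add: fA_def sum_negf)
    finally show ?thesis .
  qed
qed

end

context cons begin

definition psi :: "nat \<Rightarrow> 'f vec" where
  "psi v = (if v < M then \<phi>0 v else
     (let c = (v - M) div 3; r = (v - M) mod 3; i = fst (prod_decode (snd (prod_decode c)));
          t = snd (prod_decode (snd (prod_decode c))) in
      if i < q \<and> t < n i ^ 2 then
        (if r = 0 then e i (ll i) (t div n i) else if r = 1 then e i (t div n i) (t mod n i) else e i (t mod n i) (ll i))
      else azero))"

lemma psi_var: "r < 3 \<Longrightarrow> i < q \<Longrightarrow> t < n i ^ 2 \<Longrightarrow> psi (var M (enc b i t) r) =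
   (if r = 0 then e i (ll i) (t div n i) else if r = 1 then e i (t div n i) (t mod n i) else e i (t mod n i) (ll i))"
  unfolding psi_def var_def enc_def by (simp add: Let_def)

lemma dm_bounds: "i < q \<Longrightarrow> t < n i ^ 2 \<Longrightarrow> t div n i < n i \<and> t mod n i < n i"
proof -
  assume i: "i < q" and t: "t < n i ^ 2"
  have np: "0 < n i" using npos[OF i] .
  have "t div n i < n i" using t np by (simp add: power2_eq_square less_mult_imp_div_less)
  moreover have "t mod n i < n i" using np by simp
  ultimately show ?thesis by simp
qed

lemma ll_lt: "i < q \<Longrightarrow> ll i < n i" using zv by blast
lemma kk_lt: "i < q \<Longrightarrow> kk i < n i" using zv by blast

lemma psi_carrier: "psi v \<in> acarrier A"
proof (cases "v < M")
  case True then show ?thesis using phi0c by (simp add: psi_def)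
next
  case False
  then show ?thesis unfolding psi_def Let_def
    using WM_e_carrier[OF WM] dm_bounds ll_lt by auto
qed

lemma absorb_concat:
  assumes "\<forall>u\<in>set us. set u \<subseteq> acarrier A \<and> (\<forall>rest. set rest \<subseteq> acarrier A \<longrightarrow> aprod A (a # u @ rest) = aprod A (a # rest))"
  shows "set rest \<subseteq> acarrier A \<Longrightarrow> aprod A (a # concat us @ rest) = aprod A (a # rest)"
  using assms
proof (induction us arbitrary: rest)
  case Nil then show ?case by simp
next
  case (Cons u us)
  have c: "set (concat us @ rest) \<subseteq> acarrier A" using Cons.prems by auto
  have "aprod A (a # concat (u # us) @ rest) = aprod A (a # u @ (concat us @ rest))" by simp
  also have "\<dots> = aprod A (a # concat us @ rest)" using Cons.prems c by auto
  also have "\<dots> = aprod A (a # rest)" using Cons by auto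
  finally show ?case .
qed

lemma absorb_triple:
  assumes "a \<in> acarrier A" "y \<in> acarrier A" "x \<in> acarrier A" "y' \<in> acarrier A"
    "amul A (amul A (amul A a y) x) y' = a" "set rest \<subseteq> acarrier A"
  shows "aprod A (a # [y, x, y'] @ rest) = aprod A (a # rest)"
proof -
  have "aprod A (a # [y, x, y'] @ rest) = aprod A ([] @ a # y # x # y' # rest)" by simp
  also have "\<dots> = aprod A ([] @ amul A a y # x # y' # rest)"
    by (rule aprod_merge[OF alg]) (use assms in auto)
  also have "\<dots> = aprod A ([] @ amul A (amul A a y) x # y' # rest)"
    by (rule aprod_merge[OF alg]) (use assms in auto)
  also have "\<dots> = aprod A ([] @ amul A (amul A (amul A a y) x) y' # rest)"
    by (rule aprod_merge[OF alg]) (use assms in auto)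
  finally show ?thesis using assms(5) by simp
qed

lemma psi_Qw:
  assumes i: "i < q"
  shows "aprod A (map psi (z i # Qw M n R i)) = e i (kk i) (ll i)"
proof -
  let ?a = "e i (kk i) (ll i)"
  have ac: "?a \<in> acarrier A" using WM_e_carrier[OF WM i kk_lt[OF i] ll_lt[OF i]] .
  have trip: "\<forall>rest. set rest \<subseteq> acarrier A \<longrightarrow> aprod A (?a # map psi [var M (enc b i t) 0, var M (enc b i t) 1, var M (enc b i t) 2] @ rest) = aprod A (?a # rest)"
    if t: "t < n i ^ 2" for b t
  proof (intro allI impI)
    fix rest :: "'f vec list" assume r: "set rest \<subseteq> acarrier A"
    have db: "t div n i < n i" "t mod n i < n i" using dm_bounds[OF i t] by auto
    have "amul A (amul A (amul A ?a (e i (ll i) (t div n i))) (e i (t div n i) (t mod n i))) (e i (t mod n i) (ll i)) = ?a"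
      using WM_mult[OF WM] i db kk_lt[OF i] ll_lt[OF i] by simp
    moreover have "map psi [var M (enc b i t) 0, var M (enc b i t) 1, var M (enc b i t) 2] =
        [e i (ll i) (t div n i), e i (t div n i) (t mod n i), e i (t mod n i) (ll i)]"
      using psi_var[OF _ i t] by simp
    moreover have "e i (ll i) (t div n i) \<in> acarrier A" "e i (t div n i) (t mod n i) \<in> acarrier A"
      "e i (t mod n i) (ll i) \<in> acarrier A"
      using WM_e_carrier[OF WM i] db ll_lt[OF i] by auto
    ultimately show "aprod A (?a # map psi [var M (enc b i t) 0, var M (enc b i t) 1, var M (enc b i t) 2] @ rest) = aprod A (?a # rest)"
      using absorb_triple[OF ac _ _ _ _ r] by presburger
  qed
  have segabs: "\<forall>rest. set rest \<subseteq> acarrier A \<longrightarrow> aprod A (?a # map psi (seg M n b i) @ rest) = aprod A (?a # rest)" for b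
  proof (intro allI impI)
    fix rest :: "'f vec list" assume r: "set rest \<subseteq> acarrier A"
    have "map psi (seg M n b i) = concat (map (\<lambda>t. map psi [var M (enc b i t) 0, var M (enc b i t) 1, var M (enc b i t) 2]) [0..<n i ^ 2])"
      unfolding seg_def by (simp add: map_concat comp_def)
    moreover have "aprod A (?a # concat (map (\<lambda>t. map psi [var M (enc b i t) 0, var M (enc b i t) 1, var M (enc b i t) 2]) [0..<n i ^ 2]) @ rest) = aprod A (?a # rest)"
      by (rule absorb_concat[OF _ r]) (use trip psi_carrier in auto)
    ultimately show "aprod A (?a # map psi (seg M n b i) @ rest) = aprod A (?a # rest)" by simp
  qed
  have "map psi (Qw M n R i) = concat (map (\<lambda>b. map psi (seg M n b i)) [0..<R])"
    unfolding Qw_def by (simp add: map_concat comp_def)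
  moreover have "aprod A (?a # concat (map (\<lambda>b. map psi (seg M n b i)) [0..<R]) @ []) = aprod A (?a # [])"
    by (rule absorb_concat) (use segabs psi_carrier in auto)
  moreover have "psi (z i) = ?a"
  proof -
    have "z i < M" using Mb z_pvars[OF i] by blast
    then show ?thesis using zv i by (simp add: psi_def)
  qed
  ultimately show ?thesis by simp
qed

end

context cons begin

lemma peval_g:
  assumes "\<forall>v. \<psi> v \<in> acarrier A"
  shows "peval A \<psi> g = peval A (\<lambda>v. aprod A (map \<psi> (tau M n R q z v))) f0"
  unfolding g_def
proof (rule peval_msubst[OF alg assms])
  show "inj_on (\<lambda>w. concat (map (tau M n R q z) w)) (psupp f0)"
    using cm_inj_supp[of "[]"] by (auto simp: cm_def[abs_def] inj_on_def)
qed (use tau_ne f0_nil f0_fin in auto)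

lemma E_id: "peval A (\<lambda>v. aprod A (map psi (tau M n R q z v))) f0 = peval A \<phi>0 f0"
proof (rule peval_cong, intro ballI)
  fix v assume v: "v \<in> pvars f0"
  show "aprod A (map psi (tau M n R q z v)) = \<phi>0 v"
  proof (cases "v \<in> z ` {..<q}")
    case True
    then obtain i where i: "i < q" "v = z i" by blast
    then show ?thesis using tau_z[OF i(1)] psi_Qw[OF i(1)] zv by simp
  next
    case False
    have "v < M" using Mb v by blast
    then show ?thesis using tau_other[OF False] by (simp add: psi_def)
  qed
qed

lemma E_nonid:
  assumes s: "\<sigma> \<in> G" and ns: "\<sigma> \<noteq> id"
  shows "peval A (\<lambda>v. aprod A (map (psi \<circ> inv \<sigma>) (tau M n R q z v))) f0 = azero"
proof -
  let ?E = "\<lambda>v. aprod A (map (psi \<circ> inv \<sigma>) (tau M n R q z v))"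
  let ?p = "psi \<circ> inv \<sigma>"
  obtain x where x: "\<sigma> x \<noteq> x" using ns by (metis eq_id_iff)
  have xX: "x \<in> Xset" using x permutes_not_in[OF G_perm[OF s]] by blast
  define y where "y = \<sigma> x"
  have yX: "y \<in> Xset" using permutes_in_image[OF G_perm[OF s]] xX y_def by simp
  have iy: "inv \<sigma> y = x" using permutes_inverses[OF G_perm[OF s]] y_def by simp
  obtain b i t where bit: "y = var M (enc b i t) 1" "b < R" "i < q" "t < n i ^ 2" using yX unfolding Xset_def by blast
  obtain b' i' t' where bit': "x = var M (enc b' i' t') 1" "b' < R" "i' < q" "t' < n i' ^ 2" using xX unfolding Xset_def by blast
  have "blk M x = blk M y" using G_inv_X[OF s yX] iy by simp
  then have bb: "b' = b" using bit bit' blk_var by simp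
  have neq: "(i', t') \<noteq> (i, t)" using x bit bit' bb y_def by auto
  define Y where "Y = var M (enc b i t) 0"
  define Z where "Z = var M (enc b i t) 2"
  have YX: "Y \<notin> Xset" "Z \<notin> Xset" unfolding Y_def Z_def Xset_def by (auto simp: var_inj)
  have pY: "?p Y = e i (ll i) (t div n i)" using G_inv_notX[OF s YX(1)] psi_var[OF _ bit(3,4)] Y_def by simp
  have pZ: "?p Z = e i (t mod n i) (ll i)" using G_inv_notX[OF s YX(2)] psi_var[OF _ bit(3,4)] Z_def by simp
  have pX: "?p y = e i' (t' div n i') (t' mod n i')" using iy bit' psi_var[OF _ bit'(3,4)] by simp
  have db: "t div n i < n i" "t mod n i < n i" using dm_bounds[OF bit(3,4)] by auto
  have db': "t' div n i' < n i'" "t' mod n i' < n i'" using dm_bounds[OF bit'(3,4)] by auto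
  have prod0: "amul A (amul A (?p Y) (?p y)) (?p Z) = azero"
  proof (cases "i = i' \<and> t div n i = t' div n i'")
    case True
    then have ii: "i' = i" and dd: "t' div n i' = t div n i" by auto
    have pX': "?p y = e i (t div n i) (t' mod n i)" using pX ii dd by simp
    have dm': "t' mod n i < n i" using db' ii by simp
    have m1: "amul A (?p Y) (?p y) = e i (ll i) (t' mod n i)"
      using WM_mult[OF WM bit(3) ll_lt[OF bit(3)] db(1) bit(3) db(1) dm'] pY pX' by simp
    have "t' mod n i \<noteq> t mod n i"
    proof
      assume "t' mod n i = t mod n i"
      then have "t' = t" using dd ii by (metis div_mult_mod_eq)
      then show False using neq ii by simp
    qed
    then show ?thesis using m1 pZ WM_mult[OF WM bit(3) ll_lt[OF bit(3)] dm' bit(3) db(2) ll_lt[OF bit(3)]] by simp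
  next
    case False
    then have "amul A (?p Y) (?p y) = azero"
      using pY pX WM_mult[OF WM bit(3) ll_lt[OF bit(3)] db(1) bit'(3) db'] by auto
    then show ?thesis by simp
  qed
  have Ez: "?E (z i) = azero"
  proof -
    obtain pre post where qs: "Qw M n R i = pre @ seg M n b i @ post"
      unfolding Qw_def using concat_split[OF bit(2)] by blast
    obtain pre2 post2 where ss: "seg M n b i = pre2 @ [Y, y, Z] @ post2"
      unfolding seg_def Y_def Z_def bit(1) using concat_split[OF bit(4)] by blast
    have c: "\<forall>v. ?p v \<in> acarrier A" using psi_carrier by simp
    have "map ?p (tau M n R q z (z i)) = map ?p (z i # pre @ pre2) @ ?p Y # ?p y # ?p Z # map ?p (post2 @ post)"
      using tau_z[OF bit(3)] qs ss by simp
    then have "?E (z i) = aprod A (map ?p (z i # pre @ pre2) @ ?p Y # ?p y # ?p Z # map ?p (post2 @ post))"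
      by simp
    also have "\<dots> = aprod A (map ?p (z i # pre @ pre2) @ amul A (?p Y) (?p y) # ?p Z # map ?p (post2 @ post))"
      by (rule aprod_merge[OF alg]) (use c in auto)
    also have "\<dots> = aprod A (map ?p (z i # pre @ pre2) @ amul A (amul A (?p Y) (?p y)) (?p Z) # map ?p (post2 @ post))"
      by (rule aprod_merge[OF alg]) (use c in auto)
    also have "\<dots> = azero" using prod0 by (simp add: aprod_zero_mem)
    finally show ?thesis .
  qed
  have "?E = ?E(z i := azero)" using Ez by auto
  then have "peval A ?E f0 = peval A (?E(z i := azero)) f0" by simp
  also have "\<dots> = azero"
    by (rule peval_upd_zero) (use f0_words z_pvars[OF bit(3)] in blast)
  finally show ?thesis .
qed

lemma peval_psi_fA: "peval A psi fA = peval A \<phi>0 f0"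
proof -
  have fAe: "fA = (\<lambda>w. \<Sum>\<sigma>\<in>G. of_int (sign \<sigma>) * ren \<sigma> g w)" by (simp add: fA_def ren_def)
  have fin: "\<forall>\<sigma>\<in>G. finite (psupp (ren \<sigma> g))"
  proof
    fix \<sigma> assume "\<sigma> \<in> G"
    then have "psupp (ren \<sigma> g) = map (inv \<sigma>) ` psupp g" using psupp_ren[OF G_bij] by blast
    then show "finite (psupp (ren \<sigma> g))" using g_fin by simp
  qed
  have "peval A psi fA = (\<lambda>x. \<Sum>\<sigma>\<in>G. of_int (sign \<sigma>) * peval A psi (ren \<sigma> g) x)"
    unfolding fAe by (rule peval_sum[OF G_fin fin])
  also have "\<dots> = (\<lambda>x. \<Sum>\<sigma>\<in>G. (if \<sigma> = id then peval A \<phi>0 f0 x else 0))"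
  proof (intro ext sum.cong refl)
    fix x \<sigma> assume s: "\<sigma> \<in> G"
    have c: "\<forall>v. (psi \<circ> inv \<sigma>) v \<in> acarrier A" using psi_carrier by simp
    have "peval A psi (ren \<sigma> g) = peval A (\<lambda>v. aprod A (map (psi \<circ> inv \<sigma>) (tau M n R q z v))) f0"
      unfolding peval_ren[OF G_bij[OF s]] by (rule peval_g[OF c])
    then show "of_int (sign \<sigma>) * peval A psi (ren \<sigma> g) x = (if \<sigma> = id then peval A \<phi>0 f0 x else 0)"
      using E_id E_nonid[OF s] by (auto simp: azero_def)
  qed
  also have "\<dots> = peval A \<phi>0 f0" using G_fin id_G by (simp add: sum.delta)
  finally show ?thesis .
qed

lemma fA_nonid: "\<not> is_identity A fA"
proof
  assume "is_identity A fA"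
  then have "peval A psi fA = azero" using psi_carrier unfolding is_identity_def by blast
  then show False using peval_psi_fA nz by simp
qed

end

lemma adj_nz:
  assumes "is_alg C" "set (xs @ a # b # ys) \<subseteq> acarrier C" "aprod C (xs @ a # b # ys) \<noteq> azero"
  shows "amul C a b \<noteq> azero"
proof
  assume h: "amul C a b = azero"
  have "aprod C (xs @ a # b # ys) = aprod C (xs @ amul C a b # ys)"
    by (rule aprod_merge[OF assms(1)]) (use assms(2) in auto)
  also have "\<dots> = azero" using h by (simp add: aprod_zero_mem)
  finally show False using assms(3) by simp
qed

lemma same_comp:
  assumes WMC: "is_WM C qC nC eC dC jsC"
  shows "vs \<noteq> [] \<Longrightarrow> \<forall>x\<in>set vs. \<exists>c k l. c < qC \<and> k < nC c \<and> l < nC c \<and> x = eC c k l \<Longrightarrow>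
    (\<forall>s1 a b s2. vs = s1 @ a # b # s2 \<longrightarrow> amul C a b \<noteq> azero) \<Longrightarrow>
    \<exists>c<qC. \<forall>x\<in>set vs. \<exists>k<nC c. \<exists>l<nC c. x = eC c k l"
proof (induction vs rule: induct_list012)
  case 1 then show ?case by simp
next
  case (2 x) then show ?case by auto
next
  case (3 x y zs)
  have adj: "\<forall>s1 a b s2. y # zs = s1 @ a # b # s2 \<longrightarrow> amul C a b \<noteq> azero"
  proof (intro allI impI)
    fix s1 a b s2 assume "y # zs = s1 @ a # b # s2"
    then have "x # y # zs = (x # s1) @ a # b # s2" by simp
    then show "amul C a b \<noteq> azero" using "3.prems"(3) by blast
  qed
  obtain c where c: "c < qC" "\<forall>x\<in>set (y # zs). \<exists>k<nC c. \<exists>l<nC c. x = eC c k l"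
    using "3.IH"(2) "3.prems"(2) adj by auto
  obtain k2 l2 where y: "k2 < nC c" "l2 < nC c" "y = eC c k2 l2" using c by auto
  obtain c' k l where x: "c' < qC" "k < nC c'" "l < nC c'" "x = eC c' k l" using "3.prems"(2) by auto
  have "amul C x y \<noteq> azero" using "3.prems"(3) by (metis append_Nil)
  then have "c' = c" using WM_mult[OF WMC x(1,2,3) c(1) y(1,2)] x y by (auto split: if_splits)
  then show ?case using c x by auto
qed

context cons begin

lemma pvars_fA: "pvars fA = Wall"
proof -
  obtain w where "fA w \<noteq> 0"
  proof -
    have "fA \<noteq> (\<lambda>_. 0)"
    proof
      assume "fA = (\<lambda>_. 0)"
      then have "peval A psi fA = azero" by (simp add: peval_def azero_def)
      then show False using peval_psi_fA nz by simp
    qed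
    then show ?thesis using that by auto
  qed
  then show ?thesis using fA_words unfolding pvars_def by blast
qed

lemma Vb_inv: "\<sigma> \<in> G \<Longrightarrow> v \<in> Vb bb \<Longrightarrow> inv \<sigma> v \<in> Vb bb"
proof -
  assume s: "\<sigma> \<in> G" and v: "v \<in> Vb bb"
  show ?thesis
  proof (cases "v \<in> Xset")
    case True
    have b: "blk M v = bb" using blk_Vb[OF v] .
    have "inv \<sigma> v \<in> Xset" "blk M (inv \<sigma> v) = bb" using G_inv_X[OF s True] b by auto
    then show ?thesis unfolding Xset_def Vb_def by (force simp: blk_var)
  next
    case False then show ?thesis using G_inv_notX[OF s] v by simp
  qed
qed

lemma Sb_inv: "\<sigma> \<in> G \<Longrightarrow> bb < R \<Longrightarrow> v \<in> Sb bb \<Longrightarrow> inv \<sigma> v \<in> Sb bb"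
proof -
  assume s: "\<sigma> \<in> G" and bb: "bb < R" and v: "v \<in> Sb bb"
  have vX: "v \<in> Xset" using SbsubX[OF bb] v by blast
  have b: "blk M v = bb" using blk_Vb SbsubVb v by blast
  have "inv \<sigma> v \<in> Xset" "blk M (inv \<sigma> v) = bb" using G_inv_X[OF s vX] b by auto
  then show ?thesis unfolding Xset_def Sb_def by (force simp: blk_var)
qed

lemma key:
  fixes C :: "'f alg"
  assumes Calg: "is_alg C" and CWM: "is_WM C qC nC eC dC jsC"
    and KC: "\<forall>xs. set xs \<subseteq> acarrier C \<longrightarrow> K < length (filter (\<lambda>x. x \<in> jsC ` {..<dC}) xs) \<longrightarrow> aprod C xs = azero"
    and KR: "K < R"
    and phib: "\<forall>v\<in>pvars fA. \<phi> v \<in> basis_set qC nC eC dC jsC"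
    and nzC: "peval C \<phi> fA \<noteq> azero"
  shows "(\<forall>bb<R. inj_on \<phi> (Sb bb)) \<and>
    (\<exists>\<sigma>\<in>G. \<exists>w0\<in>psupp f0. \<exists>bb<R. aprod C (map \<phi> (map (inv \<sigma>) (cm w0))) \<noteq> azero \<and>
       (\<forall>v\<in>Vb bb. \<phi> v \<notin> jsC ` {..<dC}))"
proof
  show "\<forall>bb<R. inj_on \<phi> (Sb bb)"
  proof (intro allI impI inj_onI)
    fix bb a a' assume bb: "bb < R" and a: "a \<in> Sb bb" "a' \<in> Sb bb" "\<phi> a = \<phi> a'"
    show "a = a'"
    proof (rule ccontr)
      assume "a \<noteq> a'"
      then have "peval C \<phi> fA = azero"
        using alt_zero[of fA a a' \<phi> C] fA_alt[OF bb a(1,2)] a(3) fA_fin by blast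
      then show False using nzC by simp
    qed
  qed
  obtain w where w: "fA w \<noteq> 0" "aprod C (map \<phi> w) \<noteq> azero"
  proof (rule ccontr)
    assume "\<not> thesis"
    then have "\<forall>w. fA w \<noteq> 0 \<longrightarrow> aprod C (map \<phi> w) = azero" using that by blast
    then have "peval C \<phi> fA = azero" by (auto simp: peval_def azero_def fun_eq_iff intro!: sum.neutral)
    then show False using nzC by simp
  qed
  obtain \<sigma> w0 where s: "\<sigma> \<in> G" "w0 \<in> psupp f0" "w = map (inv \<sigma>) (cm w0)" using fA_supp[OF w(1)] by blast
  have dw: "distinct w" and sw: "set w = Wall" using fA_words[OF w(1)] by auto
  have car: "set (map \<phi> w) \<subseteq> acarrier C"
    using sw pvars_fA phib basis_carrier[OF CWM] by auto
  have "\<exists>bb<R. \<forall>v\<in>Vb bb. \<phi> v \<notin> jsC ` {..<dC}"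
  proof (rule ccontr)
    assume "\<not> ?thesis"
    then have "\<forall>bb\<in>{..<R}. \<exists>v. v \<in> Vb bb \<and> \<phi> v \<in> jsC ` {..<dC}" by blast
    then obtain rv where rv: "\<forall>bb\<in>{..<R}. rv bb \<in> Vb bb \<and> \<phi> (rv bb) \<in> jsC ` {..<dC}"
      using bchoice by metis
    have inj: "inj_on rv {..<R}" using rv blk_Vb by (metis inj_onI)
    have sub: "rv ` {..<R} \<subseteq> {x. \<phi> x \<in> jsC ` {..<dC}} \<inter> set w"
      using rv VbsubW sw by auto
    have "R = card (rv ` {..<R})" using card_image[OF inj] by simp
    also have "\<dots> \<le> card ({x. \<phi> x \<in> jsC ` {..<dC}} \<inter> set w)"
      by (rule card_mono) (use sub in auto)
    also have "\<dots> = length (filter (\<lambda>x. \<phi> x \<in> jsC ` {..<dC}) w)"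
      using distinct_length_filter[OF dw] by simp
    also have "\<dots> = length (filter (\<lambda>x. x \<in> jsC ` {..<dC}) (map \<phi> w))" by (simp add: comp_def)
    finally have "K < length (filter (\<lambda>x. x \<in> jsC ` {..<dC}) (map \<phi> w))" using KR by linarith
    then have "aprod C (map \<phi> w) = azero" using KC car by blast
    then show False using w(2) by simp
  qed
  then show "\<exists>\<sigma>\<in>G. \<exists>w0\<in>psupp f0. \<exists>bb<R. aprod C (map \<phi> (map (inv \<sigma>) (cm w0))) \<noteq> azero \<and>
       (\<forall>v\<in>Vb bb. \<phi> v \<notin> jsC ` {..<dC})"
    using s w(2) by blast
qed

lemma card_Sb: "card (Sb bb) = (\<Sum>i<q. n i ^ 2)"
proof -
  have "Sb bb = (\<lambda>(i, t). var M (enc bb i t) 1) ` (SIGMA i:{..<q}. {..<n i ^ 2})"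
    unfolding Sb_def by force
  moreover have "inj_on (\<lambda>(i, t). var M (enc bb i t) 1) (SIGMA i:{..<q}. {..<n i ^ 2})"
    by (auto simp: inj_on_def var_inj enc_inj)
  ultimately show ?thesis by (simp add: card_image)
qed

lemma card_EA_le: "card {e i k l | i k l. i < q \<and> k < n i \<and> l < n i} \<le> (\<Sum>i<q. n i ^ 2)"
proof -
  have "{e i k l | i k l. i < q \<and> k < n i \<and> l < n i} = (\<lambda>(i, k, l). e i k l) ` (SIGMA i:{..<q}. {..<n i} \<times> {..<n i})"
    by force
  moreover have "card ((\<lambda>(i, k, l). e i k l) ` (SIGMA i:{..<q}. {..<n i} \<times> {..<n i})) \<le> card (SIGMA i:{..<q}. {..<n i} \<times> {..<n i})"
    by (rule card_image_le) simp
  ultimately have "card {e i k l | i k l. i < q \<and> k < n i \<and> l < n i} \<le> card (SIGMA i:{..<q}. {..<n i} \<times> {..<n i})"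
    by simp
  also have "\<dots> = (\<Sum>i<q. n i ^ 2)" by (simp add: power2_eq_square)
  finally show ?thesis .
qed

lemma sfull:
  assumes KA: "\<forall>xs. set xs \<subseteq> acarrier A \<longrightarrow> K < length (filter (\<lambda>x. x \<in> js ` {..<d}) xs) \<longrightarrow> aprod A xs = azero"
    and KR: "K < R"
  shows "strongly_full A q n e d js fA"
  unfolding strongly_full_def
proof (intro conjI fA_ml fA_nonid allI impI)
  fix \<phi> i k l
  assume h: "admissible q n e d js fA \<phi> \<and> peval A \<phi> fA \<noteq> azero" and ikl: "i < q" "k < n i" "l < n i"
  have phib: "\<forall>v\<in>pvars fA. \<phi> v \<in> basis_set q n e d js" using h unfolding admissible_def by blast
  obtain bb where bb: "bb < R" "\<forall>v\<in>Vb bb. \<phi> v \<notin> js ` {..<d}" and inj: "inj_on \<phi> (Sb bb)"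
    using key[OF alg WM KA KR phib] h by blast
  let ?EA = "{e i k l | i k l. i < q \<and> k < n i \<and> l < n i}"
  have SbP: "Sb bb \<subseteq> pvars fA" using SbsubVb VbsubW[OF bb(1)] pvars_fA by blast
  have sub: "\<phi> ` Sb bb \<subseteq> ?EA"
  proof
    fix x assume "x \<in> \<phi> ` Sb bb"
    then obtain v where v: "v \<in> Sb bb" "x = \<phi> v" by blast
    have "\<phi> v \<in> basis_set q n e d js" using phib SbP v by blast
    moreover have "\<phi> v \<notin> js ` {..<d}" using bb(2) SbsubVb v by blast
    ultimately show "x \<in> ?EA" using v unfolding basis_set_def by blast
  qed
  have finE: "finite ?EA"
  proof -
    have "?EA = (\<lambda>(i, k, l). e i k l) ` (SIGMA i:{..<q}. {..<n i} \<times> {..<n i})" by force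
    then show ?thesis by simp
  qed
  have "card ?EA \<le> card (\<phi> ` Sb bb)"
    using card_EA_le card_Sb card_image[OF inj] by simp
  then have "\<phi> ` Sb bb = ?EA" using card_seteq[OF finE sub] by blast
  then have "e i k l \<in> \<phi> ` Sb bb" using ikl by blast
  then show "\<exists>x\<in>pvars fA. \<phi> x = e i k l" using SbP by force
qed

end

lemma pdims_len: "length (pdims q n) = q" by (simp add: pdims_def)
lemma pdims_nth: "i < q \<Longrightarrow> pdims q n ! i = n i ^ 2" by (simp add: pdims_def)

context cons begin

lemma set_w: "\<sigma> \<in> G \<Longrightarrow> w0 \<in> psupp f0 \<Longrightarrow> set (map (inv \<sigma>) (cm w0)) = Wall"
proof -
  assume s: "\<sigma> \<in> G" and w0: "w0 \<in> psupp f0"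
  have p: "inv \<sigma> permutes Xset" using permutes_inv[OF G_perm[OF s]] .
  have "inv \<sigma> ` Wall = inv \<sigma> ` Xset \<union> inv \<sigma> ` (Wall - Xset)" using XsubW by blast
  also have "inv \<sigma> ` Xset = Xset" using permutes_image[OF p] .
  also have "inv \<sigma> ` (Wall - Xset) = Wall - Xset" using permutes_not_in[OF p] by force
  finally have "inv \<sigma> ` Wall = Wall" using XsubW by blast
  then show ?thesis using set_cm[OF w0] by simp
qed

lemma B_ident:
  fixes B :: "'f alg"
  assumes Balg: "is_alg B" and BWM: "is_WM B qB nB eB dB jsB" and nc: "\<not> covers (pdims qB nB) (pdims q n)"
    and KB: "\<forall>xs. set xs \<subseteq> acarrier B \<longrightarrow> K < length (filter (\<lambda>x. x \<in> jsB ` {..<dB}) xs) \<longrightarrow> aprod B xs = azero"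
    and KR: "K < R"
  shows "is_identity B fA"
proof (rule ident_basis[OF fA_ml BWM], intro allI impI)
  fix \<phi> assume phib: "\<forall>v\<in>pvars fA. \<phi> v \<in> basis_set qB nB eB dB jsB"
  show "peval B \<phi> fA = azero"
  proof (rule ccontr)
    assume nzB: "peval B \<phi> fA \<noteq> azero"
    obtain \<sigma> w0 bb where s: "\<sigma> \<in> G" "w0 \<in> psupp f0" "bb < R"
      "aprod B (map \<phi> (map (inv \<sigma>) (cm w0))) \<noteq> azero" "\<forall>v\<in>Vb bb. \<phi> v \<notin> jsB ` {..<dB}"
      and inj: "inj_on \<phi> (Sb bb)" using key[OF Balg BWM KB KR phib nzB] by blast
    define w where "w = map (inv \<sigma>) (cm w0)"
    have sw: "set w = Wall" using set_w[OF s(1,2)] w_def by simp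
    have car: "set (map \<phi> w) \<subseteq> acarrier B"
      using sw pvars_fA phib basis_carrier[OF BWM] by auto
    have EB: "\<exists>c k l. c < qB \<and> k < nB c \<and> l < nB c \<and> \<phi> v = eB c k l" if "v \<in> Vb bb" for v
    proof -
      have "v \<in> pvars fA" using that VbsubW[OF s(3)] pvars_fA by blast
      then have "\<phi> v \<in> basis_set qB nB eB dB jsB" using phib by blast
      moreover have "\<phi> v \<notin> jsB ` {..<dB}" using s(5) that by blast
      ultimately show ?thesis unfolding basis_set_def by blast
    qed
    have comp: "\<exists>c<qB. \<forall>t<n i ^ 2. \<exists>k<nB c. \<exists>l<nB c. \<phi> (inv \<sigma> (var M (enc bb i t) 1)) = eB c k l"
      if i: "i < q" for i
    proof -
      have "z i \<in> set w0" using f0_words[OF s(2)] z_pvars[OF i] by blast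
      then obtain u1 u2 where u: "w0 = u1 @ z i # u2" by (meson split_list)
      obtain pre post where qs: "Qw M n R i = pre @ seg M n bb i @ post"
        unfolding Qw_def using concat_split[OF s(3)] by blast
      have "cm w0 = (cm u1 @ z i # pre) @ seg M n bb i @ (post @ cm u2)"
        using u qs tau_z[OF i] by (simp add: cm_def)
      then have ws: "map \<phi> w = map \<phi> (map (inv \<sigma>) (cm u1 @ z i # pre)) @ map \<phi> (map (inv \<sigma>) (seg M n bb i)) @ map \<phi> (map (inv \<sigma>) (post @ cm u2))"
        unfolding w_def by simp
      let ?s = "map \<phi> (map (inv \<sigma>) (seg M n bb i))"
      have adj: "\<forall>s1 a b s2. ?s = s1 @ a # b # s2 \<longrightarrow> amul B a b \<noteq> azero"
      proof (intro allI impI)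
        fix s1 a b s2 assume "?s = s1 @ a # b # s2"
        then have e: "map \<phi> w = (map \<phi> (map (inv \<sigma>) (cm u1 @ z i # pre)) @ s1) @ a # b # (s2 @ map \<phi> (map (inv \<sigma>) (post @ cm u2)))"
          using ws by simp
        have c1: "set ((map \<phi> (map (inv \<sigma>) (cm u1 @ z i # pre)) @ s1) @ a # b # (s2 @ map \<phi> (map (inv \<sigma>) (post @ cm u2)))) \<subseteq> acarrier B"
          using car unfolding e .
        have c2: "aprod B ((map \<phi> (map (inv \<sigma>) (cm u1 @ z i # pre)) @ s1) @ a # b # (s2 @ map \<phi> (map (inv \<sigma>) (post @ cm u2)))) \<noteq> azero"
          using s(4) unfolding w_def[symmetric] e .
        show "amul B a b \<noteq> azero" by (rule adj_nz[OF Balg c1 c2])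
      qed
      have ne: "?s \<noteq> []"
      proof -
        have "var M (enc bb i 0) 0 \<in> set (seg M n bb i)" unfolding set_seg
          by (rule CollectI, rule exI[of _ 0], rule exI[of _ 0]) (use npos[OF i] in simp)
        then show ?thesis by auto
      qed
      have segV: "set (seg M n bb i) \<subseteq> Vb bb" unfolding set_seg Vb_def using i by blast
      have allE: "\<forall>x\<in>set ?s. \<exists>c k l. c < qB \<and> k < nB c \<and> l < nB c \<and> x = eB c k l"
        using EB Vb_inv[OF s(1)] segV by auto
      obtain c where c: "c < qB" "\<forall>x\<in>set ?s. \<exists>k<nB c. \<exists>l<nB c. x = eB c k l"
        using same_comp[OF BWM ne allE adj] by blast
      have "\<forall>t<n i ^ 2. \<exists>k<nB c. \<exists>l<nB c. \<phi> (inv \<sigma> (var M (enc bb i t) 1)) = eB c k l"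
      proof (intro allI impI)
        fix t assume t: "t < n i ^ 2"
        have "var M (enc bb i t) 1 \<in> set (seg M n bb i)" unfolding set_seg using t by force
        then have "\<phi> (inv \<sigma> (var M (enc bb i t) 1)) \<in> set ?s" by simp
        then show "\<exists>k<nB c. \<exists>l<nB c. \<phi> (inv \<sigma> (var M (enc bb i t) 1)) = eB c k l" using c by blast
      qed
      then show ?thesis using c by blast
    qed
    then have "\<forall>i\<in>{..<q}. \<exists>c. c < qB \<and> (\<forall>t<n i ^ 2. \<exists>k<nB c. \<exists>l<nB c. \<phi> (inv \<sigma> (var M (enc bb i t) 1)) = eB c k l)"
      by blast
    then obtain gf where gf: "\<forall>i\<in>{..<q}. gf i < qB \<and> (\<forall>t<n i ^ 2. \<exists>k<nB (gf i). \<exists>l<nB (gf i). \<phi> (inv \<sigma> (var M (enc bb i t) 1)) = eB (gf i) k l)"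
      using bchoice by metis
    have "covers (pdims qB nB) (pdims q n)"
      unfolding covers_def
    proof (intro exI[of _ gf] conjI allI impI)
      fix i assume "i < length (pdims q n)"
      then show "gf i < length (pdims qB nB)" using gf by (simp add: pdims_len)
    next
      fix j assume "j < length (pdims qB nB)"
      then have j: "j < qB" by (simp add: pdims_len)
      define I where "I = {i. i < q \<and> gf i = j}"
      define f where "f = (\<lambda>(i, t). inv \<sigma> (var M (enc bb i t) 1))"
      define S where "S = (SIGMA i:I. {..<n i ^ 2})"
      have finI: "finite I" unfolding I_def by simp
      have injf: "inj_on f S"
      proof -
        have "inj (inv \<sigma>)" using G_bij[OF s(1)] bij_imp_bij_inv bij_is_inj by blast
        then have "\<forall>x y. inv \<sigma> x = inv \<sigma> y \<longrightarrow> x = y" by (simp add: inj_def)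
        show ?thesis
        proof (rule inj_onI)
          fix p p' assume "p \<in> S" "p' \<in> S" "f p = f p'"
          obtain i t i' t' where pp: "p = (i, t)" "p' = (i', t')" by (cases p, cases p')
          have "var M (enc bb i t) 1 = var M (enc bb i' t') 1"
            using \<open>f p = f p'\<close> \<open>inj (inv \<sigma>)\<close> pp unfolding f_def by (simp add: inj_eq)
          then show "p = p'" using pp by (simp add: var_inj enc_inj)
        qed
      qed
      have cardT: "card (f ` S) = (\<Sum>i\<in>I. n i ^ 2)"
        using card_image[OF injf] finI unfolding S_def by simp
      have TS: "f ` S \<subseteq> Sb bb"
      proof
        fix x assume "x \<in> f ` S"
        then obtain i t where it: "i \<in> I" "t < n i ^ 2" "x = inv \<sigma> (var M (enc bb i t) 1)"
          unfolding f_def S_def by auto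
        have "var M (enc bb i t) 1 \<in> Sb bb" using it unfolding Sb_def I_def by blast
        then show "x \<in> Sb bb" using Sb_inv[OF s(1) s(3)] it by blast
      qed
      have img: "\<phi> ` f ` S \<subseteq> (\<lambda>(k, l). eB j k l) ` ({..<nB j} \<times> {..<nB j})"
      proof
        fix x assume "x \<in> \<phi> ` f ` S"
        then obtain i t where it: "i \<in> I" "t < n i ^ 2" "x = \<phi> (inv \<sigma> (var M (enc bb i t) 1))"
          unfolding f_def S_def by auto
        then have "i < q" "gf i = j" unfolding I_def by auto
        then obtain k l where "k < nB j" "l < nB j" "x = eB j k l" using gf it by force
        then show "x \<in> (\<lambda>(k, l). eB j k l) ` ({..<nB j} \<times> {..<nB j})" by force
      qed
      have eqc: "card (\<phi> ` f ` S) = card (f ` S)"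
        using card_image inj_on_subset[OF inj TS] by blast
      have "card (\<phi> ` f ` S) \<le> card ((\<lambda>(k, l). eB j k l) ` ({..<nB j} \<times> {..<nB j}))"
        by (rule card_mono[OF _ img]) simp
      also have "\<dots> \<le> card ({..<nB j} \<times> {..<nB j})" by (rule card_image_le) simp
      also have "\<dots> = nB j ^ 2" by (simp add: power2_eq_square)
      finally have le: "(\<Sum>i\<in>I. n i ^ 2) \<le> nB j ^ 2" using cardT eqc by simp
      have "(\<Sum>i | i < length (pdims q n) \<and> gf i = j. pdims q n ! i) = (\<Sum>i\<in>I. n i ^ 2)"
        unfolding I_def pdims_len by (rule sum.cong) (auto simp: pdims_nth)
      then show "(\<Sum>i | i < length (pdims q n) \<and> gf i = j. pdims q n ! i) \<le> pdims qB nB ! j"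
        using le j by (simp add: pdims_nth)
    qed
    then show False using nc by simp
  qed
qed

end

lemma sum_if_const: "(\<Sum>x\<in>S. if P then f x else 0) = (if P then sum f S else (0::'a::comm_monoid_add))"
  by (cases P) simp_all

lemma WM_e_nonzero:
  assumes WM: "is_WM A q n e d js" and ikl: "i < q" "k < n i" "l < n i"
  shows "e i k l \<noteq> azero"
proof
  assume ez: "e i k l = azero"
  define a where "a = (\<lambda>i' k' l'. if i' = i \<and> k' = k \<and> l' = l then 1 else 0 :: 'a)"
  have ss: "ss_comb q n e a = e i k l"
  proof
    fix t
    have "ss_comb q n e a t = (\<Sum>i'<q. \<Sum>k'<n i'. \<Sum>l'<n i'. (if i' = i then (if k' = k then (if l' = l then e i k l t else 0) else 0) else 0))"
      unfolding ss_comb_def a_def by (intro sum.cong refl) auto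
    also have "\<dots> = e i k l t" using ikl by (simp add: sum_if_const sum.delta)
    finally show "ss_comb q n e a t = e i k l t" .
  qed
  have "rad_comb d js (\<lambda>_. 0) = azero" by (simp add: rad_comb_def azero_def fun_eq_iff)
  then have "aadd (ss_comb q n e a) (rad_comb d js (\<lambda>_. 0)) = azero"
    using ss ez by (simp add: aadd_def azero_def fun_eq_iff)
  then have "a i k l = 0" using WM_parts5[OF WM] ikl by blast
  then show False by (simp add: a_def)
qed

lemma WM_e_comp:
  assumes WM: "is_WM A q n e d js" and b: "i < q" "k < n i" "l < n i" "j < q" "k' < n j" "l' < n j"
    and eq: "e i k l = e j k' l'"
  shows "i = j"
proof (rule ccontr)
  assume ij: "i \<noteq> j"
  have "amul A (e i k l) (e i l l) = e i k l" using WM_mult[OF WM b(1,2,3) b(1,3,3)] by simp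
  moreover have "amul A (e j k' l') (e i l l) = azero" using WM_mult[OF WM b(4,5,6) b(1,3,3)] ij by simp
  ultimately have "e i k l = azero" using eq by simp
  then show False using WM_e_nonzero[OF WM b(1,2,3)] by simp
qed

theorem corollary2p5:
  fixes A :: "('f::field_char_0) alg" and Bs :: "'f alg list" and f0 :: "'f ncpoly"
    and q d :: nat and n :: "nat \<Rightarrow> nat" and e :: "nat \<Rightarrow> nat \<Rightarrow> nat \<Rightarrow> 'f vec"
    and js :: "nat \<Rightarrow> 'f vec"
  assumes "alg_closed TYPE('f)"
    and "is_alg A" and "is_WM A q n e d js" and "is_full A q n e d js"
    and "\<forall>B\<in>set Bs. is_alg B \<and>
           (\<exists>qB nB eB dB jsB. is_WM B qB nB eB dB jsB \<and> is_full B qB nB eB dB jsB \<and>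
              \<not> covers (pdims qB nB) (pdims q n))"
    and "weakly_full A q n e d js f0"
  shows "\<exists>fA. fA \<in> Tideal f0 \<and> strongly_full A q n e d js fA \<and>
           (\<forall>B\<in>set Bs. is_identity B fA) \<and> is_identity (alg_dsum Bs) fA"
proof -
  note alg = assms(2) and WM = assms(3) and hB = assms(5) and wf = assms(6)
  have ml: "multilinear f0" using wf unfolding weakly_full_def by blast
  obtain \<phi>1 where p1: "admissible q n e d js f0 \<phi>1" "peval A \<phi>1 f0 \<noteq> azero"
      "\<forall>i<q. \<exists>x\<in>pvars f0. \<exists>k<n i. \<exists>l<n i. \<phi>1 x = e i k l"
    using wf unfolding weakly_full_def by blast
  define \<phi>0 where "\<phi>0 = (\<lambda>v. if v \<in> pvars f0 then \<phi>1 v else azero)"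
  have phi0c: "\<forall>v. \<phi>0 v \<in> acarrier A"
    using p1(1) basis_carrier[OF WM] unfolding \<phi>0_def admissible_def by auto
  have nz: "peval A \<phi>0 f0 \<noteq> azero"
    using p1(2) peval_cong[of f0 \<phi>0 \<phi>1 A] unfolding \<phi>0_def by simp
  have "\<forall>i\<in>{..<q}. \<exists>p. fst p \<in> pvars f0 \<and> fst (snd p) < n i \<and> snd (snd p) < n i \<and>
      \<phi>0 (fst p) = e i (fst (snd p)) (snd (snd p))"
  proof
    fix i assume "i \<in> {..<q}"
    then obtain x k l where "x \<in> pvars f0" "k < n i" "l < n i" "\<phi>1 x = e i k l" using p1(3) by blast
    then show "\<exists>p. fst p \<in> pvars f0 \<and> fst (snd p) < n i \<and> snd (snd p) < n i \<and>
      \<phi>0 (fst p) = e i (fst (snd p)) (snd (snd p))"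
      by (intro exI[of _ "(x, k, l)"]) (simp add: \<phi>0_def)
  qed
  then obtain P where P: "\<forall>i\<in>{..<q}. fst (P i) \<in> pvars f0 \<and> fst (snd (P i)) < n i \<and> snd (snd (P i)) < n i \<and>
      \<phi>0 (fst (P i)) = e i (fst (snd (P i))) (snd (snd (P i)))"
    using bchoice by metis
  define z where "z = (\<lambda>i. fst (P i))"
  define kk where "kk = (\<lambda>i. fst (snd (P i)))"
  define ll where "ll = (\<lambda>i. snd (snd (P i)))"
  have zv: "\<forall>i<q. z i \<in> pvars f0 \<and> kk i < n i \<and> ll i < n i \<and> \<phi>0 (z i) = e i (kk i) (ll i)"
    using P unfolding z_def kk_def ll_def by auto
  have zinj: "inj_on z {..<q}"
  proof (rule inj_onI)
    fix i j assume "i \<in> {..<q}" "j \<in> {..<q}" "z i = z j"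
    then have ij: "i < q" "j < q" "z i = z j" by auto
    then have "e i (kk i) (ll i) = e j (kk j) (ll j)" using zv by metis
    then show "i = j" using zv ij WM_e_comp[OF WM, of i "kk i" "ll i" j "kk j" "ll j"] by auto
  qed
  define M where "M = Suc (Max (insert 0 (pvars f0)))"
  have Mb: "\<forall>v\<in>pvars f0. v < M"
  proof
    fix v assume "v \<in> pvars f0"
    then have "v \<le> Max (insert 0 (pvars f0))" using multilinear_pvars_finite[OF ml] by simp
    then show "v < M" unfolding M_def by simp
  qed
  obtain KA where KA: "\<forall>xs. set xs \<subseteq> acarrier A \<longrightarrow> KA < length (filter (\<lambda>x. x \<in> js ` {..<d}) xs) \<longrightarrow> aprod A xs = azero"
    using WM_nilbound[OF alg WM] by blast
  have "\<forall>B\<in>set Bs. \<exists>K. \<exists>qB nB eB dB jsB. is_WM B qB nB eB dB jsB \<and> \<not> covers (pdims qB nB) (pdims q n) \<and>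
      (\<forall>xs. set xs \<subseteq> acarrier B \<longrightarrow> K < length (filter (\<lambda>x. x \<in> jsB ` {..<dB}) xs) \<longrightarrow> aprod B xs = azero)"
  proof
    fix B assume "B \<in> set Bs"
    then obtain qB nB eB dB jsB where B: "is_alg B" "is_WM B qB nB eB dB jsB" "\<not> covers (pdims qB nB) (pdims q n)"
      using hB by blast
    obtain K where "\<forall>xs. set xs \<subseteq> acarrier B \<longrightarrow> K < length (filter (\<lambda>x. x \<in> jsB ` {..<dB}) xs) \<longrightarrow> aprod B xs = azero"
      using WM_nilbound[OF B(1,2)] by blast
    then show "\<exists>K. \<exists>qB nB eB dB jsB. is_WM B qB nB eB dB jsB \<and> \<not> covers (pdims qB nB) (pdims q n) \<and>
      (\<forall>xs. set xs \<subseteq> acarrier B \<longrightarrow> K < length (filter (\<lambda>x. x \<in> jsB ` {..<dB}) xs) \<longrightarrow> aprod B xs = azero)"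
      using B by blast
  qed
  then obtain Kf where Kf: "\<forall>B\<in>set Bs. \<exists>qB nB eB dB jsB. is_WM B qB nB eB dB jsB \<and> \<not> covers (pdims qB nB) (pdims q n) \<and>
      (\<forall>xs. set xs \<subseteq> acarrier B \<longrightarrow> Kf B < length (filter (\<lambda>x. x \<in> jsB ` {..<dB}) xs) \<longrightarrow> aprod B xs = azero)"
    using bchoice by metis
  define R where "R = Suc (KA + sum_list (map Kf Bs))"
  have KAR: "KA < R" unfolding R_def by simp
  have KBR: "Kf B < R" if "B \<in> set Bs" for B
  proof -
    have "Kf B \<le> sum_list (map Kf Bs)" using that by (simp add: member_le_sum_list)
    then show ?thesis unfolding R_def by simp
  qed
  interpret C: cons A q n e d js f0 \<phi>0 z kk ll M R
    by unfold_locales (use alg WM ml phi0c nz zv zinj Mb in auto)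
  have Bid: "\<forall>B\<in>set Bs. is_identity B C.fA"
  proof
    fix B assume B: "B \<in> set Bs"
    then obtain qB nB eB dB jsB where h: "is_WM B qB nB eB dB jsB" "\<not> covers (pdims qB nB) (pdims q n)"
      "\<forall>xs. set xs \<subseteq> acarrier B \<longrightarrow> Kf B < length (filter (\<lambda>x. x \<in> jsB ` {..<dB}) xs) \<longrightarrow> aprod B xs = azero"
      using Kf by blast
    have "is_alg B" using hB B by blast
    then show "is_identity B C.fA" using C.B_ident[OF _ h(1,2,3) KBR[OF B]] by blast
  qed
  show ?thesis
    using C.fA_T C.sfull[OF KA KAR] Bid ident_dsum[OF Bid C.fA_fin] by blast
qed

end
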